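(* Fix $q\in\mathbb R$, a bounded sequence $\{x_n\}\subset\mathbb R^n$, and sequences $T_n\to\infty$, $q_n\to q$. Let $\varphi^n\in\mathcal A^{x_n}_{T_n}(q_n)$ satisfy $I^{x_n}_{T_n}(\varphi^n)=S^{x_n}_{T_n}(q_n)$, and set $y_n:=\varphi^n_{T_n}$. Then there exists $C>0$ such that $|y_n|\le C(T_n+1)$ for all $n\ge1$.
   Context: Standing assumptions: $V\in C^2(\mathbb R^n;\mathbb R)$ satisfies $\lim_{|x|\to\infty}\langle\nabla V(x),x\rangle/|x|=+\infty$; $b:\mathbb R^n\to\mathbb R^n$ is a $C^1$, bounded vector field with bounded first derivatives, not conservative; and $\langle\nabla V(x),b(x)\rangle=0$ for every $x$. Set $c:=-\tfrac12\nabla V+b$. For $T>0$: $H_T$ is the set of absolutely continuous $\varphi:[0,T]\to\mathbb R^n$ with $\int_0^T|\dot\varphi_t|^2dt<\infty$, $H^x_T:=\{\varphi\in H_T:\varphi_0=x\}$; $I^x_T(\varphi):=\frac12\int_0^T|\dot\varphi_t-c(\varphi_t)|^2dt$ for $\varphi\in H^x_T$, $+\infty$ otherwise; $\mathcal L_T(\varphi):=\frac2T\int_0^T\langle b(\varphi_t),\dot\varphi_t\rangle dt$; $\mathcal A^x_T(q):=\{\varphi\in H^x_T:\mathcal L_T(\varphi)=q\}$; $S^x_T(q):=\inf\{I^x_T(\varphi):\varphi\in\mathcal A^x_T(q)\}$. *)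

theory Defs
  imports "HOL-Analysis.Analysis"
begin

definition abs_cont_on :: "real \<Rightarrow> real \<Rightarrow> (real \<Rightarrow> 'a::real_normed_vector) \<Rightarrow> bool" where
  "abs_cont_on a b f \<longleftrightarrow>
     (\<forall>\<epsilon>>0. \<exists>\<delta>>0. \<forall>(k::nat) (l::nat \<Rightarrow> real) (r::nat \<Rightarrow> real).
        (\<forall>i<k. a \<le> l i \<and> l i \<le> r i \<and> r i \<le> b) \<longrightarrow>
        (\<forall>i<k. \<forall>j<k. i \<noteq> j \<longrightarrow> r i \<le> l j \<or> r j \<le> l i) \<longrightarrow>
        (\<Sum>i<k. r i - l i) < \<delta> \<longrightarrow>
        (\<Sum>i<k. norm (f (r i) - f (l i))) < \<epsilon>)"

definition dpath :: "real \<Rightarrow> (real \<Rightarrow> 'a::real_normed_vector) \<Rightarrow> real \<Rightarrow> 'a" where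
  "dpath T \<phi> t = vector_derivative \<phi> (at t within {0..T})"

definition H_T :: "real \<Rightarrow> (real \<Rightarrow> 'a::euclidean_space) set" where
  "H_T T = {\<phi>. abs_cont_on 0 T \<phi> \<and>
      (AE t in lebesgue. t \<in> {0..T} \<longrightarrow> \<phi> differentiable (at t within {0..T})) \<and>
      set_integrable lebesgue {0..T} (\<lambda>t. (norm (dpath T \<phi> t))\<^sup>2)}"

definition H_Tx :: "real \<Rightarrow> 'a::euclidean_space \<Rightarrow> (real \<Rightarrow> 'a) set" where
  "H_Tx T x = {\<phi> \<in> H_T T. \<phi> 0 = x}"

definition cfield :: "('a::euclidean_space \<Rightarrow> 'a) \<Rightarrow> ('a \<Rightarrow> 'a) \<Rightarrow> 'a \<Rightarrow> 'a" where
  "cfield gV b x = - (1/2) *\<^sub>R gV x + b x"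

definition I_T :: "('a::euclidean_space \<Rightarrow> 'a) \<Rightarrow> ('a \<Rightarrow> 'a) \<Rightarrow> real \<Rightarrow> 'a \<Rightarrow> (real \<Rightarrow> 'a) \<Rightarrow> ereal" where
  "I_T gV b T x \<phi> = (if \<phi> \<in> H_Tx T x then
      ereal ((1/2) * (LINT t:{0..T}|lebesgue. (norm (dpath T \<phi> t - cfield gV b (\<phi> t)))\<^sup>2))
    else \<infinity>)"

definition L_T :: "('a::euclidean_space \<Rightarrow> 'a) \<Rightarrow> real \<Rightarrow> (real \<Rightarrow> 'a) \<Rightarrow> real" where
  "L_T b T \<phi> = (2 / T) * (LINT t:{0..T}|lebesgue. inner (b (\<phi> t)) (dpath T \<phi> t))"

definition A_T :: "('a::euclidean_space \<Rightarrow> 'a) \<Rightarrow> real \<Rightarrow> 'a \<Rightarrow> real \<Rightarrow> (real \<Rightarrow> 'a) set" where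
  "A_T b T x q = {\<phi> \<in> H_Tx T x. L_T b T \<phi> = q}"

definition S_T :: "('a::euclidean_space \<Rightarrow> 'a) \<Rightarrow> ('a \<Rightarrow> 'a) \<Rightarrow> real \<Rightarrow> 'a \<Rightarrow> real \<Rightarrow> ereal" where
  "S_T gV b T x q = (INF \<phi>\<in>A_T b T x q. I_T gV b T x \<phi>)"

end

theory Submission
  imports Defs
begin

lemma abs_cont_onD:
  assumes "abs_cont_on a b f" "e > 0"
  obtains d where "d > 0" "\<And>(k::nat) (l::nat \<Rightarrow> real) r.
        \<forall>i<k. a \<le> l i \<and> l i \<le> r i \<and> r i \<le> b \<Longrightarrow>
        \<forall>i<k. \<forall>j<k. i \<noteq> j \<longrightarrow> r i \<le> l j \<or> r j \<le> l i \<Longrightarrow>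
        (\<Sum>i<k. r i - l i) < d \<Longrightarrow> (\<Sum>i<k. norm (f (r i) - f (l i))) < e"
proof -
  obtain d where d: "d > 0" and H: "\<forall>(k::nat) (l::nat \<Rightarrow> real) r.
        (\<forall>i<k. a \<le> l i \<and> l i \<le> r i \<and> r i \<le> b) \<longrightarrow>
        (\<forall>i<k. \<forall>j<k. i \<noteq> j \<longrightarrow> r i \<le> l j \<or> r j \<le> l i) \<longrightarrow>
        (\<Sum>i<k. r i - l i) < d \<longrightarrow> (\<Sum>i<k. norm (f (r i) - f (l i))) < e"
    using assms(1)[unfolded abs_cont_on_def, rule_format, OF assms(2)] by blast
  show ?thesis
    by (rule that[OF d]) (use H in blast)
qed

lemma ac_continuous:
  fixes f :: "real \<Rightarrow> 'a::real_normed_vector"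
  assumes "abs_cont_on a b f"
  shows "continuous_on {a..b} f"
  unfolding continuous_on_iff
proof (intro ballI allI impI)
  fix x e assume x: "x \<in> {a..b}" and e: "(0::real) < e"
  obtain d where d: "d > 0" and H: "\<And>(k::nat) (l::nat \<Rightarrow> real) r.
        \<forall>i<k. a \<le> l i \<and> l i \<le> r i \<and> r i \<le> b \<Longrightarrow>
        \<forall>i<k. \<forall>j<k. i \<noteq> j \<longrightarrow> r i \<le> l j \<or> r j \<le> l i \<Longrightarrow>
        (\<Sum>i<k. r i - l i) < d \<Longrightarrow> (\<Sum>i<k. norm (f (r i) - f (l i))) < e"
    using abs_cont_onD[OF assms e] by blast
  show "\<exists>d>0. \<forall>x'\<in>{a..b}. dist x' x < d \<longrightarrow> dist (f x') (f x) < e"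
  proof (intro exI[of _ d] conjI ballI impI d)
    fix y assume y: "y \<in> {a..b}" and dy: "dist y x < d"
    have "(\<Sum>i<(1::nat). max x y - min x y) < d" using dy by (auto simp add: dist_real_def max_def min_def abs_if)
    then have "(\<Sum>i<(1::nat). norm (f ((\<lambda>_. max x y) i) - f ((\<lambda>_. min x y) i))) < e"
      using H[of 1 "\<lambda>_. min x y" "\<lambda>_. max x y"] x y by auto
    moreover have "norm (f (max x y) - f (min x y)) = dist (f y) (f x)"
      by (cases "x \<le> y") (simp_all add: dist_norm max_def min_def, metis norm_minus_commute)
    ultimately show "dist (f y) (f x) < e" by simp
  qed
qed

lemma ac_comp_lip:
  fixes f :: "real \<Rightarrow> 'a::real_normed_vector" and g :: "'a \<Rightarrow> 'b::real_normed_vector"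
  assumes "abs_cont_on a b f" and L: "L > 0"
    and lip: "\<And>u v. u \<in> f ` {a..b} \<Longrightarrow> v \<in> f ` {a..b} \<Longrightarrow> norm (g u - g v) \<le> L * norm (u - v)"
  shows "abs_cont_on a b (g \<circ> f)"
  unfolding abs_cont_on_def
proof (intro allI impI)
  fix e :: real assume e: "e > 0"
  have eL: "e / L > 0" using e L by simp
  obtain d where d: "d > 0" and H: "\<And>(k::nat) (l::nat \<Rightarrow> real) r.
        \<forall>i<k. a \<le> l i \<and> l i \<le> r i \<and> r i \<le> b \<Longrightarrow>
        \<forall>i<k. \<forall>j<k. i \<noteq> j \<longrightarrow> r i \<le> l j \<or> r j \<le> l i \<Longrightarrow>
        (\<Sum>i<k. r i - l i) < d \<Longrightarrow> (\<Sum>i<k. norm (f (r i) - f (l i))) < e / L"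
    using abs_cont_onD[OF assms(1) eL] by blast
  show "\<exists>d>0. \<forall>(k::nat) (l::nat \<Rightarrow> real) r.
        (\<forall>i<k. a \<le> l i \<and> l i \<le> r i \<and> r i \<le> b) \<longrightarrow>
        (\<forall>i<k. \<forall>j<k. i \<noteq> j \<longrightarrow> r i \<le> l j \<or> r j \<le> l i) \<longrightarrow>
        (\<Sum>i<k. r i - l i) < d \<longrightarrow> (\<Sum>i<k. norm ((g \<circ> f) (r i) - (g \<circ> f) (l i))) < e"
  proof (intro exI[of _ d] conjI allI impI d)
    fix k :: nat and l r :: "nat \<Rightarrow> real"
    assume 1: "\<forall>i<k. a \<le> l i \<and> l i \<le> r i \<and> r i \<le> b"
      and 2: "\<forall>i<k. \<forall>j<k. i \<noteq> j \<longrightarrow> r i \<le> l j \<or> r j \<le> l i"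
      and 3: "(\<Sum>i<k. r i - l i) < d"
    have "(\<Sum>i<k. norm ((g \<circ> f) (r i) - (g \<circ> f) (l i))) \<le> (\<Sum>i<k. L * norm (f (r i) - f (l i)))"
      using 1 by (intro sum_mono) (auto intro!: lip)
    also have "\<dots> = L * (\<Sum>i<k. norm (f (r i) - f (l i)))" by (simp add: sum_distrib_left)
    also have "\<dots> < L * (e / L)" using H[of k l r] 1 2 3 L by (intro mult_strict_left_mono) auto
    also have "\<dots> = e" using L by simp
    finally show "(\<Sum>i<k. norm ((g \<circ> f) (r i) - (g \<circ> f) (l i))) < e" .
  qed
qed

lemma lip_ac:
  fixes f :: "real \<Rightarrow> 'a::real_normed_vector"
  assumes L: "L \<ge> 0" and lip: "\<And>s t. s \<in> {a..b} \<Longrightarrow> t \<in> {a..b} \<Longrightarrow> norm (f s - f t) \<le> L * \<bar>s - t\<bar>"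
  shows "abs_cont_on a b f"
  unfolding abs_cont_on_def
proof (intro allI impI)
  fix e :: real assume e: "e > 0"
  show "\<exists>d>0. \<forall>(k::nat) (l::nat \<Rightarrow> real) r.
        (\<forall>i<k. a \<le> l i \<and> l i \<le> r i \<and> r i \<le> b) \<longrightarrow>
        (\<forall>i<k. \<forall>j<k. i \<noteq> j \<longrightarrow> r i \<le> l j \<or> r j \<le> l i) \<longrightarrow>
        (\<Sum>i<k. r i - l i) < d \<longrightarrow> (\<Sum>i<k. norm (f (r i) - f (l i))) < e"
  proof (intro exI[of _ "e / (L + 1)"] conjI allI impI)
    show "e / (L + 1) > 0" using e L by simp
    fix k :: nat and l r :: "nat \<Rightarrow> real"
    assume 1: "\<forall>i<k. a \<le> l i \<and> l i \<le> r i \<and> r i \<le> b"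
      and 3: "(\<Sum>i<k. r i - l i) < e / (L + 1)"
    have "(\<Sum>i<k. norm (f (r i) - f (l i))) \<le> (\<Sum>i<k. L * (r i - l i))"
    proof (intro sum_mono)
      fix i assume "i \<in> {..<k}"
      then have "l i \<in> {a..b}" "r i \<in> {a..b}" "l i \<le> r i" using 1 by auto
      then show "norm (f (r i) - f (l i)) \<le> L * (r i - l i)" using lip[of "r i" "l i"] by simp
    qed
    also have "\<dots> = L * (\<Sum>i<k. r i - l i)" by (simp add: sum_distrib_left)
    also have "\<dots> \<le> L * (e / (L + 1))" using 3 L by (intro mult_left_mono) auto
    also have "\<dots> < e" using L e by (simp add: field_simps)
    finally show "(\<Sum>i<k. norm (f (r i) - f (l i))) < e" .
  qed
qed

lemma negligible_countable:
  fixes A :: "'a::euclidean_space set"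
  assumes "countable A" shows "negligible A"
proof -
  have "A = \<Union>((\<lambda>x. {x}) ` A)" by auto
  moreover have "negligible (\<Union>((\<lambda>x. {x}) ` A))"
    by (rule negligible_countable_Union) (auto simp: assms)
  ultimately show ?thesis by simp
qed

lemma measure_lebesgue_Icc_real: "u \<le> v \<Longrightarrow> measure lebesgue {u..v::real} = v - u"
  by simp

lemma nonoverlap_real:
  fixes u1 v1 u2 v2 :: real
  assumes "u1 < v1" "u2 < v2" "{u1<..<v1} \<inter> {u2<..<v2} = {}"
  shows "v1 \<le> u2 \<or> v2 \<le> u1"
proof (rule ccontr)
  assume "\<not> (v1 \<le> u2 \<or> v2 \<le> u1)"
  then have "(max u1 u2 + min v1 v2) / 2 \<in> {u1<..<v1} \<inter> {u2<..<v2}"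
    using assms(1,2) by (auto simp: max_def min_def)
  then show False using assms(3) by blast
qed

lemma sum_lengths_le_measure:
  fixes l r :: "nat \<Rightarrow> real"
  assumes lr: "\<And>i. i < k \<Longrightarrow> l i \<le> r i"
    and dis: "\<And>i j. i < k \<Longrightarrow> j < k \<Longrightarrow> i \<noteq> j \<Longrightarrow> r i \<le> l j \<or> r j \<le> l i"
    and sub: "\<And>i. i < k \<Longrightarrow> {l i..r i} \<subseteq> Op" and Op: "Op \<in> lmeasurable"
  shows "(\<Sum>i<k. r i - l i) \<le> measure lebesgue Op"
proof -
  have "measure lebesgue (\<Union>i\<in>{..<k}. {l i..r i}) = (\<Sum>i\<in>{..<k}. measure lebesgue {l i..r i})"
  proof (rule measure_negligible_finite_Union_image)
    show "pairwise (\<lambda>i j. negligible ({l i..r i} \<inter> {l j..r j})) {..<k}"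
      unfolding pairwise_def
    proof (intro ballI impI)
      fix i j assume "i \<in> {..<k}" "j \<in> {..<k}" "i \<noteq> j"
      then have "r i \<le> l j \<or> r j \<le> l i" using dis by auto
      then have "{l i..r i} \<inter> {l j..r j} \<subseteq> {r i, r j}" by auto
      then show "negligible ({l i..r i} \<inter> {l j..r j})"
        by (rule negligible_subset[rotated]) auto
    qed
  qed auto
  also have "\<dots> = (\<Sum>i<k. r i - l i)"
    using lr by (intro sum.cong) auto
  finally have eq: "measure lebesgue (\<Union>i\<in>{..<k}. {l i..r i}) = (\<Sum>i<k. r i - l i)" .
  have "measure lebesgue (\<Union>i\<in>{..<k}. {l i..r i}) \<le> measure lebesgue Op"
    using sub Op by (intro measure_mono_fmeasurable) auto
  then show ?thesis using eq by simp
qed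

lemma ac_ftc:
  fixes F :: "real \<Rightarrow> real"
  assumes ab: "a < b" and ac: "abs_cont_on a b F" and negl: "negligible ({a..b} - D)"
    and D: "D \<subseteq> {a..b}"
    and der: "\<And>t. t \<in> D \<Longrightarrow> (F has_real_derivative f t) (at t within {a..b})"
  shows "((\<lambda>t. if t \<in> D then f t else 0) has_integral (F b - F a)) {a..b}"
  unfolding has_integral_factor_content_real
proof (intro allI impI)
  fix e :: real assume e: "e > 0"
  define g where "g = (\<lambda>t. if t \<in> D then f t else 0)"
  define E where "E = {a..b} - D"
  have e2: "e * (b - a) / 2 > 0" using e ab by simp
  obtain \<delta> where \<delta>: "\<delta> > 0" and H: "\<And>(k::nat) (l::nat \<Rightarrow> real) r.
        \<forall>i<k. a \<le> l i \<and> l i \<le> r i \<and> r i \<le> b \<Longrightarrow>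
        \<forall>i<k. \<forall>j<k. i \<noteq> j \<longrightarrow> r i \<le> l j \<or> r j \<le> l i \<Longrightarrow>
        (\<Sum>i<k. r i - l i) < \<delta> \<Longrightarrow> (\<Sum>i<k. norm (F (r i) - F (l i))) < e * (b - a) / 2"
    using abs_cont_onD[OF ac e2] by blast
  have Eneg: "negligible E" using negl by (simp add: E_def)
  then have Els: "E \<in> sets lebesgue" by (simp add: negligible_imp_sets)
  obtain Op where Op: "open Op" "E \<subseteq> Op" "(Op - E) \<in> lmeasurable" "emeasure lebesgue (Op - E) < ennreal \<delta>"
    using sets_lebesgue_outer_open[OF Els \<delta>] by blast
  have Elm: "E \<in> lmeasurable" using Eneg by (rule negligible_imp_measurable)
  have OE: "Op = (Op - E) \<union> E" using Op(2) by auto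
  have Olm: "Op \<in> lmeasurable" using Op(3) Elm by (subst OE) (rule fmeasurable.Un)
  have "measure lebesgue (Op - E) < \<delta>"
    using Op(4) Op(3) \<delta> by (simp add: emeasure_eq_measure2 ennreal_less_iff)
  moreover have "measure lebesgue Op \<le> measure lebesgue (Op - E) + measure lebesgue E"
    using Op(3) Elm by (subst OE) (intro measure_Un_le; auto)
  moreover have "measure lebesgue E = 0" using Eneg by (rule negligible_imp_measure0)
  ultimately have Omeas: "measure lebesgue Op < \<delta>" by linarith
  have "\<forall>x. \<exists>d>0. x \<in> D \<longrightarrow>
         (\<forall>y\<in>{a..b}. norm (y-x) < d \<longrightarrow> norm (F y - F x - (y-x) * f x) \<le> (e/2) * norm (y-x))"
  proof
    fix x show "\<exists>d>0. x \<in> D \<longrightarrow>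
         (\<forall>y\<in>{a..b}. norm (y-x) < d \<longrightarrow> norm (F y - F x - (y-x) * f x) \<le> (e/2) * norm (y-x))"
    proof (cases "x \<in> D")
      case True
      have "(F has_vector_derivative f x) (at x within {a..b})"
        using der[OF True] by (simp add: has_real_derivative_iff_has_vector_derivative)
      then have A: "\<forall>\<epsilon>>0. \<exists>d>0. \<forall>y\<in>{a..b}. norm (y-x) < d \<longrightarrow> norm (F y - F x - (y-x) *\<^sub>R f x) \<le> \<epsilon> * norm (y-x)"
        unfolding has_vector_derivative_def has_derivative_within_alt by simp
      have "e/2 > 0" using e by simp
      with A have "\<exists>d>0. \<forall>y\<in>{a..b}. norm (y-x) < d \<longrightarrow> norm (F y - F x - (y-x) *\<^sub>R f x) \<le> (e/2) * norm (y-x)"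
        by blast
      then show ?thesis by auto
    qed (auto intro: exI[of _ 1])
  qed
  then obtain d1 where d1: "\<And>x. 0 < d1 x"
     "\<And>x y. \<lbrakk>x \<in> D; y \<in> {a..b}; norm (y-x) < d1 x\<rbrakk>
            \<Longrightarrow> norm (F y - F x - (y-x) * f x) \<le> (e/2) * norm (y-x)"
    by metis
  have "\<forall>x. \<exists>d>0. x \<in> Op \<longrightarrow> ball x d \<subseteq> Op"
    using Op(1) open_contains_ball by blast
  then obtain d2 where d2: "\<And>x. 0 < d2 x" "\<And>x. x \<in> Op \<Longrightarrow> ball x (d2 x) \<subseteq> Op"
    by metis
  define dd where "dd x = (if x \<in> D then d1 x else d2 x)" for x
  show "\<exists>\<gamma>. gauge \<gamma> \<and> (\<forall>p. p tagged_division_of {a..b} \<and> \<gamma> fine p \<longrightarrow>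
      norm ((\<Sum>(x, K)\<in>p. measure lborel K *\<^sub>R g x) - (F b - F a)) \<le> e * measure lborel {a..b})"
    unfolding g_def[symmetric]
  proof (intro exI conjI allI impI)
    show "gauge (\<lambda>x. ball x (dd x))"
      using d1(1) d2(1) unfolding dd_def by (intro gauge_ball_dependent) auto
  next
    fix p assume "p tagged_division_of {a..b} \<and> (\<lambda>x. ball x (dd x)) fine p"
    then have ptag: "p tagged_division_of {a..b}" and finep: "(\<lambda>x. ball x (dd x)) fine p" by auto
    have finp: "finite p" using ptag by blast
    have Fba: "F b - F a = (\<Sum>(x,K)\<in>p. F(Sup K) - F(Inf K))"
      using additive_tagged_division_1[where f=F, OF less_imp_le[OF ab] ptag] by simp
    have ba: "b - a = (\<Sum>(x,K)\<in>p. Sup K - Inf K)"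
      using additive_tagged_division_1[where f="\<lambda>x. x", OF less_imp_le[OF ab] ptag] by simp
    have Kform: "\<exists>u v. K = {u..v} \<and> u \<le> v \<and> x \<in> K \<and> K \<subseteq> {a..b} \<and> Inf K = u \<and> Sup K = v
                   \<and> measure lborel K = v - u" if xKp: "(x,K) \<in> p" for x K
    proof -
      obtain u v where k: "K = cbox u v" "x \<in> K" "K \<subseteq> {a..b}"
        using tagged_division_ofD(2,3,4)[OF ptag xKp] by blast
      then have "u \<le> v" by auto
      then show ?thesis using k by (intro exI[of _ u] exI[of _ v]) auto
    qed
    define p1 where "p1 = {(x,K)\<in>p. x \<in> D}"
    define p2 where "p2 = {(x,K)\<in>p. x \<notin> D}"
    have pp: "p = p1 \<union> p2" "p1 \<inter> p2 = {}" unfolding p1_def p2_def by auto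
    have fin12: "finite p1" "finite p2" unfolding p1_def p2_def
      by (rule finite_subset[OF _ finp], force)+
    define \<Delta> where "\<Delta> = (\<lambda>(x,K). measure lborel K *\<^sub>R g x - (F (Sup K) - F (Inf K)))"
    have diff: "(\<Sum>(x, K)\<in>p. measure lborel K *\<^sub>R g x) - (F b - F a) = (\<Sum>q\<in>p. \<Delta> q)"
      unfolding Fba \<Delta>_def by (simp add: split_def sum_subtractf)
    have s1: "norm (\<Sum>q\<in>p1. \<Delta> q) \<le> (e/2) * (b - a)"
    proof -
      have "norm (\<Sum>q\<in>p1. \<Delta> q) \<le> (\<Sum>q\<in>p1. (e/2) * (case q of (x,K) \<Rightarrow> Sup K - Inf K))"
      proof (rule sum_norm_le)
        fix q assume q: "q \<in> p1"
        obtain x K where qx: "q = (x,K)" by fastforce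
        have xK: "(x,K) \<in> p" "x \<in> D" using q qx unfolding p1_def by auto
        obtain u v where uv: "K = {u..v}" "u \<le> v" "x \<in> K" "K \<subseteq> {a..b}" "Inf K = u" "Sup K = v"
            "measure lborel K = v - u" using Kform[OF xK(1)] by blast
        have ball: "\<forall>y\<in>K. y \<in> ball x (d1 x)"
          using finep xK unfolding dd_def by (force simp: fine_def)
        have "u \<in> K" "v \<in> K" using uv by auto
        have "norm ((v - u) * f x - (F v - F u)) = norm (F u - F x - (u - x) * f x - (F v - F x - (v - x) * f x))"
          by (auto simp: algebra_simps)
        also have "\<dots> \<le> norm (F u - F x - (u - x) * f x) + norm (F v - F x - (v - x) * f x)"
          by (rule norm_triangle_ineq4)
        also have "\<dots> \<le> (e/2) * norm (u - x) + (e/2) * norm (v - x)"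
        proof (rule add_mono)
          show "norm (F u - F x - (u - x) * f x) \<le> (e/2) * norm (u - x)"
          proof (rule d1(2)[OF xK(2)])
            show "u \<in> {a..b}" using \<open>u \<in> K\<close> uv(4) by blast
            have "dist x u < d1 x" using ball \<open>u \<in> K\<close> by auto
            then show "norm (u - x) < d1 x" by (simp add: dist_norm norm_minus_commute)
          qed
          show "norm (F v - F x - (v - x) * f x) \<le> (e/2) * norm (v - x)"
          proof (rule d1(2)[OF xK(2)])
            show "v \<in> {a..b}" using \<open>v \<in> K\<close> uv(4) by blast
            have "dist x v < d1 x" using ball \<open>v \<in> K\<close> by auto
            then show "norm (v - x) < d1 x" by (simp add: dist_norm norm_minus_commute)
          qed
        qed
        also have "\<dots> = (e/2) * (v - u)"
          using uv \<open>e > 0\<close> by (auto simp: field_simps)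
        finally show "norm (\<Delta> q) \<le> (e/2) * (case q of (x,K) \<Rightarrow> Sup K - Inf K)"
          using uv xK unfolding \<Delta>_def g_def qx by simp
      qed
      also have "\<dots> \<le> (\<Sum>q\<in>p. (e/2) * (case q of (x,K) \<Rightarrow> Sup K - Inf K))"
      proof (rule sum_mono2[OF finp])
        show "p1 \<subseteq> p" unfolding p1_def by auto
        fix q assume "q \<in> p - p1"
        then obtain x K where "q = (x,K)" "(x,K) \<in> p" by (metis Diff_iff prod.exhaust)
        then show "0 \<le> (e/2) * (case q of (x,K) \<Rightarrow> Sup K - Inf K)"
          using Kform e by fastforce
      qed
      also have "\<dots> = (e/2) * (b - a)"
        unfolding ba by (simp add: sum_distrib_left split_def)
      finally show ?thesis .
    qed
    define p3 where "p3 = {(x,K)\<in>p2. Inf K < Sup K}"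
    have fin3: "finite p3" unfolding p3_def
      by (rule finite_subset[OF _ fin12(2)], force)
    have s23: "(\<Sum>q\<in>p2. \<Delta> q) = (\<Sum>q\<in>p3. \<Delta> q)"
    proof (rule sum.mono_neutral_right[OF fin12(2)])
      show "p3 \<subseteq> p2" unfolding p3_def by auto
      show "\<forall>q\<in>p2 - p3. \<Delta> q = 0"
      proof
        fix q assume q: "q \<in> p2 - p3"
        then obtain x K where qx: "q = (x,K)" "(x,K) \<in> p" "x \<notin> D" "\<not> Inf K < Sup K"
          unfolding p2_def p3_def by auto
        obtain u v where uv: "K = {u..v}" "u \<le> v" "Inf K = u" "Sup K = v" "measure lborel K = v - u"
          using Kform[OF qx(2)] by blast
        then have "u = v" using qx(4) by simp
        then show "\<Delta> q = 0" using uv qx unfolding \<Delta>_def g_def by simp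
      qed
    qed
    obtain h where h: "bij_betw h {0..<card p3} p3" using ex_bij_betw_nat_finite[OF fin3] by blast
    define k where "k = card p3"
    define l where "l i = Inf (snd (h i))" for i
    define r where "r i = Sup (snd (h i))" for i
    have hp: "h i \<in> p3" if "i < k" for i using h that unfolding k_def bij_betw_def by auto
    have hinfo: "\<exists>x u v. h i = (x, {u..v}) \<and> u < v \<and> (x, {u..v}) \<in> p \<and> x \<notin> D \<and> l i = u \<and> r i = v
                  \<and> {u..v} \<subseteq> {a..b} \<and> x \<in> {u..v}" if "i < k" for i
    proof -
      obtain x K where hx: "h i = (x,K)" by fastforce
      then have "(x,K) \<in> p" "x \<notin> D" "Inf K < Sup K" using hp[OF that] unfolding p3_def p2_def by auto
      then obtain u v where uv: "K = {u..v}" "u \<le> v" "x \<in> K" "K \<subseteq> {a..b}" "Inf K = u" "Sup K = v"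
        using Kform by blast
      show ?thesis using uv hx \<open>(x,K) \<in> p\<close> \<open>x \<notin> D\<close> \<open>Inf K < Sup K\<close>
        by (intro exI[of _ x] exI[of _ u] exI[of _ v]) (auto simp: l_def r_def)
    qed
    have c1: "\<forall>i<k. a \<le> l i \<and> l i \<le> r i \<and> r i \<le> b"
    proof (intro allI impI)
      fix i assume "i < k"
      from hinfo[OF this] show "a \<le> l i \<and> l i \<le> r i \<and> r i \<le> b" by auto
    qed
    have c2: "\<forall>i<k. \<forall>j<k. i \<noteq> j \<longrightarrow> r i \<le> l j \<or> r j \<le> l i"
    proof (intro allI impI)
      fix i j assume ij: "i < k" "j < k" "i \<noteq> j"
      obtain x u v where A: "h i = (x, {u..v})" "u < v" "(x, {u..v}) \<in> p" "l i = u" "r i = v"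
        using hinfo[OF ij(1)] by blast
      obtain x' u' v' where B: "h j = (x', {u'..v'})" "u' < v'" "(x', {u'..v'}) \<in> p" "l j = u'" "r j = v'"
        using hinfo[OF ij(2)] by blast
      have "h i \<noteq> h j" using h ij unfolding bij_betw_def inj_on_def k_def by auto
      then have "interior {u..v} \<inter> interior {u'..v'} = {}"
        using tagged_division_ofD(5)[OF ptag A(3) B(3)] A(1) B(1) by auto
      then have "v \<le> u' \<or> v' \<le> u"
        using nonoverlap_real[OF A(2) B(2)] by simp
      then show "r i \<le> l j \<or> r j \<le> l i" using A B by simp
    qed
    have c3: "(\<Sum>i<k. r i - l i) < \<delta>"
    proof -
      have "(\<Sum>i<k. r i - l i) \<le> measure lebesgue Op"
      proof (rule sum_lengths_le_measure[OF _ _ _ Olm])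
        show "l i \<le> r i" if "i < k" for i using c1 that by auto
        show "r i \<le> l j \<or> r j \<le> l i" if "i < k" "j < k" "i \<noteq> j" for i j using c2 that by auto
        show "{l i..r i} \<subseteq> Op" if ik: "i < k" for i
        proof -
          obtain x u v where A: "h i = (x, {u..v})" "(x, {u..v}) \<in> p" "x \<notin> D" "l i = u" "r i = v"
             "x \<in> {u..v}" "{u..v} \<subseteq> {a..b}"
            using hinfo[OF ik] by blast
          have "x \<in> E" using A unfolding E_def by auto
          then have "x \<in> Op" using Op(2) by auto
          have "{u..v} \<subseteq> ball x (dd x)" using finep A(2) by (force simp: fine_def)
          also have "\<dots> = ball x (d2 x)" using A(3) by (simp add: dd_def)
          also have "\<dots> \<subseteq> Op" using d2(2)[OF \<open>x \<in> Op\<close>] .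
          finally show ?thesis using A by simp
        qed
      qed
      then show ?thesis using Omeas by linarith
    qed
    have Hk: "(\<Sum>i<k. norm (F (r i) - F (l i))) < e * (b - a) / 2"
      using H[OF c1 c2 c3] .
    have s3: "norm (\<Sum>q\<in>p3. \<Delta> q) \<le> e * (b - a) / 2"
    proof -
      have "(\<Sum>q\<in>p3. \<Delta> q) = (\<Sum>i<k. \<Delta> (h i))"
        using sum.reindex_bij_betw[OF h, of \<Delta>] unfolding k_def by (simp add: atLeast0LessThan)
      also have "\<dots> = (\<Sum>i<k. - (F (r i) - F (l i)))"
      proof (rule sum.cong)
        fix i assume "i \<in> {..<k}"
        then obtain x u v where A: "h i = (x, {u..v})" "x \<notin> D" "l i = u" "r i = v" "u < v"
          using hinfo by (metis lessThan_iff)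
        show "\<Delta> (h i) = - (F (r i) - F (l i))"
          using A unfolding \<Delta>_def g_def by simp
      qed auto
      finally have "norm (\<Sum>q\<in>p3. \<Delta> q) = norm (\<Sum>i<k. - (F (r i) - F (l i)))" by simp
      also have "\<dots> \<le> (\<Sum>i<k. norm (F (r i) - F (l i)))"
        by (rule order_trans[OF norm_sum]) (simp add: abs_minus_commute)
      finally show ?thesis using Hk by simp
    qed
    have "norm ((\<Sum>(x, K)\<in>p. measure lborel K *\<^sub>R g x) - (F b - F a)) = norm ((\<Sum>q\<in>p1. \<Delta> q) + (\<Sum>q\<in>p3. \<Delta> q))"
      unfolding diff s23[symmetric] using pp fin12 by (simp add: sum.union_disjoint)
    also have "\<dots> \<le> (e/2) * (b - a) + e * (b - a) / 2"
      using s1 s3 by (rule order_trans[OF norm_triangle_ineq add_mono])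
    also have "\<dots> = e * measure lborel {a..b}" using ab by simp
    finally show "norm ((\<Sum>(x, K)\<in>p. measure lborel K *\<^sub>R g x) - (F b - F a)) \<le> e * measure lborel {a..b}" .
  qed
qed

lemma measurable_on_Icc_cont:
  fixes f :: "real \<Rightarrow> 'b::euclidean_space"
  assumes "continuous_on {a..b} f"
  shows "f measurable_on {a..b}"
  using assms by (simp add: measurable_on_iff_borel_measurable continuous_imp_measurable_on_sets_lebesgue)

lemma dpath_measurable:
  fixes \<phi> :: "real \<Rightarrow> 'a::euclidean_space"
  assumes T: "T > 0" and cont: "continuous_on {0..T} \<phi>" and N: "negligible N"
    and diff: "\<And>t. t \<in> {0..T} - N \<Longrightarrow> \<phi> differentiable (at t within {0..T})"
  shows "dpath T \<phi> measurable_on {0..T}"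
proof -
  define cl where "cl t = max 0 (min T t)" for t :: real
  define \<phi>c where "\<phi>c = \<phi> \<circ> cl"
  have clc: "continuous_on UNIV cl" unfolding cl_def by (intro continuous_intros)
  have clr: "cl ` UNIV \<subseteq> {0..T}" using T unfolding cl_def by auto
  have \<phi>cc: "continuous_on UNIV \<phi>c" unfolding \<phi>c_def
    by (rule continuous_on_compose[OF clc]) (rule continuous_on_subset[OF cont clr])
  define hs where "hs n t = real (Suc n) *\<^sub>R (\<phi>c (t + 1 / real (Suc n)) - \<phi>c t)" for n t
  have hsm: "hs n measurable_on {0..T}" for n
  proof (rule measurable_on_Icc_cont)
    have "continuous_on UNIV (hs n)" unfolding hs_def
      by (intro continuous_intros continuous_on_compose2[OF \<phi>cc]) auto
    then show "continuous_on {0..T} (hs n)" by (rule continuous_on_subset) auto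
  qed
  show ?thesis
  proof (rule measurable_on_limit[OF hsm])
    show "negligible (N \<union> {T})" using N by simp
    fix t assume t: "t \<in> {0..T} - (N \<union> {T})"
    then have tT: "0 \<le> t" "t < T" by auto
    have "(\<phi> has_vector_derivative dpath T \<phi> t) (at t within {0..T})"
      unfolding dpath_def using diff t by (intro vector_derivative_works[THEN iffD1]) auto
    then have A: "\<forall>e>0. \<exists>d>0. \<forall>y\<in>{0..T}. norm (y - t) < d \<longrightarrow>
                    norm (\<phi> y - \<phi> t - (y - t) *\<^sub>R dpath T \<phi> t) \<le> e * norm (y - t)"
      unfolding has_vector_derivative_def has_derivative_within_alt by simp
    show "(\<lambda>n. hs n t) \<longlonglongrightarrow> dpath T \<phi> t"
    proof (rule LIMSEQ_I)
      fix e :: real assume e: "e > 0"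
      then have "e/2 > 0" by simp
      with A obtain d where d: "d > 0" "\<And>y. y \<in> {0..T} \<Longrightarrow> norm (y - t) < d \<Longrightarrow>
                    norm (\<phi> y - \<phi> t - (y - t) *\<^sub>R dpath T \<phi> t) \<le> (e/2) * norm (y - t)"
        by blast
      have "min d (T - t) > 0" using d tT by simp
      then obtain no where no: "inverse (real (Suc no)) < min d (T - t)"
        using reals_Archimedean by blast
      show "\<exists>no. \<forall>n\<ge>no. norm (hs n t - dpath T \<phi> t) < e"
      proof (intro exI allI impI)
        fix n assume n: "n \<ge> no"
        define y where "y = t + 1 / real (Suc n)"
        have "1 / real (Suc n) \<le> inverse (real (Suc no))"
          using n by (simp add: divide_simps)
        then have small: "1 / real (Suc n) < d" "1 / real (Suc n) < T - t" using no by auto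
        have y: "y \<in> {0..T}" "norm (y - t) = 1 / real (Suc n)" "norm (y - t) < d"
          using small tT unfolding y_def by auto
        have cly: "cl y = y" "cl t = t" using y tT unfolding cl_def by auto
        have "hs n t - dpath T \<phi> t = real (Suc n) *\<^sub>R (\<phi> y - \<phi> t - (y - t) *\<^sub>R dpath T \<phi> t)"
          unfolding hs_def \<phi>c_def using cly by (simp add: y_def algebra_simps)
        then have "norm (hs n t - dpath T \<phi> t) = real (Suc n) * norm (\<phi> y - \<phi> t - (y - t) *\<^sub>R dpath T \<phi> t)"
          by simp
        also have "\<dots> \<le> real (Suc n) * ((e/2) * norm (y - t))"
          using d(2)[OF y(1) y(3)] by (intro mult_left_mono) auto
        also have "\<dots> = e/2" using y(2) by (simp add: field_simps)
        also have "\<dots> < e" using e by simp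
        finally show "norm (hs n t - dpath T \<phi> t) < e" .
      qed
    qed
  qed
qed

lemma abs_int_bound_ae:
  fixes f :: "real \<Rightarrow> 'b::euclidean_space"
  assumes fm: "f measurable_on {a..b}" and E: "negligible E"
    and bd: "\<And>t. t \<in> {a..b} - E \<Longrightarrow> norm (f t) \<le> B"
  shows "f absolutely_integrable_on {a..b}"
proof (rule measurable_bounded_by_integrable_imp_absolutely_integrable)
  show "f \<in> borel_measurable (lebesgue_on {a..b})"
    using fm by (simp add: measurable_on_iff_borel_measurable)
  show "{a..b} \<in> sets lebesgue" by simp
  show "(\<lambda>t. if t \<in> E then norm (f t) else B) integrable_on {a..b}"
    by (rule integrable_spike[OF integrable_const_ivl[of B a b] E]) auto
  show "norm (f t) \<le> (if t \<in> E then norm (f t) else B)" if "t \<in> {a..b}" for t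
    using bd that by auto
qed

lemma energy_alg:
  fixes G B d :: "'a::euclidean_space"
  assumes "inner G B = 0"
  shows "inner G d \<le> (1/2) * (norm (d - (- (1/2) *\<^sub>R G + B)))\<^sup>2"
proof -
  have "(norm (d - (- (1/2) *\<^sub>R G + B)))\<^sup>2 - 2 * inner G d = (norm (d - (1/2) *\<^sub>R G - B))\<^sup>2"
    using assms
    by (simp add: power2_norm_eq_inner inner_diff_left inner_diff_right inner_add_left inner_add_right
        inner_commute algebra_simps)
  moreover have "(norm (d - (1/2) *\<^sub>R G - B))\<^sup>2 \<ge> 0" by simp
  ultimately show ?thesis by linarith
qed

lemma energy:
  fixes V :: "'a::euclidean_space \<Rightarrow> real" and gV b :: "'a \<Rightarrow> 'a" and \<phi> :: "real \<Rightarrow> 'a"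
  assumes V_grad: "\<And>z. (V has_derivative (\<lambda>h. inner (gV z) h)) (at z)"
    and gVc: "continuous_on UNIV gV" and bc: "continuous_on UNIV b"
    and orth: "\<And>z. inner (gV z) (b z) = 0"
    and T: "T > 0" and \<phi>H: "\<phi> \<in> H_T T"
  shows "set_integrable lebesgue {0..T} (\<lambda>t. (norm (dpath T \<phi> t - cfield gV b (\<phi> t)))\<^sup>2)"
    and "V (\<phi> T) - V (\<phi> 0) \<le> (1/2) * (LINT t:{0..T}|lebesgue. (norm (dpath T \<phi> t - cfield gV b (\<phi> t)))\<^sup>2)"
proof -
  define S where "S = {0..T::real}"
  have ac: "abs_cont_on 0 T \<phi>" and ae: "AE t in lebesgue. t \<in> {0..T} \<longrightarrow> \<phi> differentiable (at t within {0..T})"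
    and sq: "set_integrable lebesgue {0..T} (\<lambda>t. (norm (dpath T \<phi> t))\<^sup>2)"
    using \<phi>H unfolding H_T_def by auto
  have cont: "continuous_on S \<phi>" using ac_continuous[OF ac] by (simp add: S_def)
  obtain N where N: "\<And>t. t \<in> space lebesgue - N \<Longrightarrow> t \<in> {0..T} \<longrightarrow> \<phi> differentiable (at t within {0..T})"
      "N \<in> null_sets lebesgue"
    using AE_E3[OF ae] by blast
  have Nneg: "negligible N" using N(2) by (simp add: negligible_iff_null_sets)
  have diffN: "\<And>t. t \<in> {0..T} - N \<Longrightarrow> \<phi> differentiable (at t within {0..T})" using N(1) by auto
  have dm: "dpath T \<phi> measurable_on S"
    unfolding S_def by (rule dpath_measurable[OF T _ Nneg diffN]) (use cont S_def in simp)
  have dmb: "dpath T \<phi> \<in> borel_measurable (lebesgue_on S)"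
    using dm by (simp add: measurable_on_iff_borel_measurable S_def)
  define c where "c = cfield gV b"
  have cc: "continuous_on UNIV c" unfolding c_def cfield_def by (intro continuous_intros gVc bc)
  have c\<phi>: "continuous_on S (c \<circ> \<phi>)" by (rule continuous_on_compose[OF cont continuous_on_subset[OF cc]]) auto
  have "compact ((c \<circ> \<phi>) ` S)" using c\<phi> unfolding S_def by (intro compact_continuous_image) auto
  then obtain Mc where Mc: "\<And>t. t \<in> S \<Longrightarrow> norm (c (\<phi> t)) \<le> Mc"
    using compact_imp_bounded[THEN bounded_iff[THEN iffD1]] by fastforce
  have c\<phi>m: "(\<lambda>t. c (\<phi> t)) \<in> borel_measurable (lebesgue_on S)"
    using continuous_imp_measurable_on_sets_lebesgue[OF c\<phi>] by (simp add: S_def o_def)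
  define g where "g t = (norm (dpath T \<phi> t - c (\<phi> t)))\<^sup>2" for t
  have gm: "g \<in> borel_measurable (lebesgue_on S)"
    unfolding g_def using dmb c\<phi>m by measurable
  have sqi: "(\<lambda>t. (norm (dpath T \<phi> t))\<^sup>2) integrable_on S"
    using set_lebesgue_integral_eq_integral(1)[OF sq] by (simp add: S_def)
  have gb: "norm (g t) \<le> 2 * (norm (dpath T \<phi> t))\<^sup>2 + 2 * Mc\<^sup>2" if t: "t \<in> S" for t
  proof -
    have "norm (dpath T \<phi> t - c (\<phi> t)) \<le> norm (dpath T \<phi> t) + Mc"
      using norm_triangle_ineq4[of "dpath T \<phi> t" "c (\<phi> t)"] Mc[OF t] by linarith
    then have "(norm (dpath T \<phi> t - c (\<phi> t)))\<^sup>2 \<le> (norm (dpath T \<phi> t) + Mc)\<^sup>2"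
      by (intro power_mono) auto
    also have "\<dots> \<le> 2 * (norm (dpath T \<phi> t))\<^sup>2 + 2 * Mc\<^sup>2"
      using sum_squares_bound[of "norm (dpath T \<phi> t)" Mc]
      by (simp add: power2_eq_square algebra_simps)
    finally show ?thesis by (simp add: g_def)
  qed
  have gint: "g absolutely_integrable_on S"
  proof (rule measurable_bounded_by_integrable_imp_absolutely_integrable[OF gm])
    show "S \<in> sets lebesgue" by (simp add: S_def)
    show "(\<lambda>t. 2 * (norm (dpath T \<phi> t))\<^sup>2 + 2 * Mc\<^sup>2) integrable_on S"
      using sqi unfolding S_def by (intro integrable_add integrable_cmul integrable_const_ivl) auto
  qed (rule gb)
  have geq: "g = (\<lambda>t. (norm (dpath T \<phi> t - cfield gV b (\<phi> t)))\<^sup>2)"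
    by (rule ext) (simp add: g_def c_def)
  show "set_integrable lebesgue {0..T} (\<lambda>t. (norm (dpath T \<phi> t - cfield gV b (\<phi> t)))\<^sup>2)"
    using gint by (simp add: geq S_def)
  have "compact (\<phi> ` S)" using cont unfolding S_def by (intro compact_continuous_image) auto
  then obtain R where R: "\<And>t. t \<in> S \<Longrightarrow> norm (\<phi> t) \<le> R"
    using compact_imp_bounded[THEN bounded_iff[THEN iffD1]] by fastforce
  have "compact (gV ` cball 0 R)" by (intro compact_continuous_image continuous_on_subset[OF gVc]) auto
  then obtain G where G: "\<And>z. z \<in> cball 0 R \<Longrightarrow> norm (gV z) \<le> G"
    using compact_imp_bounded[THEN bounded_iff[THEN iffD1]] by fastforce
  have Vlip: "norm (V u - V v) \<le> (\<bar>G\<bar> + 1) * norm (u - v)" if "u \<in> \<phi> ` {0..T}" "v \<in> \<phi> ` {0..T}" for u v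
  proof -
    have uv: "u \<in> cball 0 R" "v \<in> cball 0 R" using that R unfolding S_def by auto
    have "norm (V u - V v) \<le> (\<bar>G\<bar> + 1) * norm (u - v)"
    proof (rule differentiable_bound[OF convex_cball _ _ uv])
      show "(V has_derivative (\<lambda>h. inner (gV z) h)) (at z within cball 0 R)" for z
        by (rule has_derivative_at_withinI[OF V_grad])
      show "onorm (\<lambda>h. inner (gV z) h) \<le> \<bar>G\<bar> + 1" if "z \<in> cball 0 R" for z
      proof (rule onorm_le)
        fix h
        have "norm (inner (gV z) h) \<le> norm (gV z) * norm h" by (simp add: Cauchy_Schwarz_ineq2)
        also have "\<dots> \<le> (\<bar>G\<bar> + 1) * norm h" using G[OF that] by (intro mult_right_mono) auto
        finally show "norm (inner (gV z) h) \<le> (\<bar>G\<bar> + 1) * norm h" .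
      qed
    qed
    then show ?thesis .
  qed
  have acF: "abs_cont_on 0 T (V \<circ> \<phi>)"
    by (rule ac_comp_lip[OF ac _ Vlip]) auto
  define D where "D = {t \<in> S. \<phi> differentiable (at t within S)}"
  have DS: "D \<subseteq> {0..T}" unfolding D_def S_def by auto
  have Dneg: "negligible ({0..T} - D)"
    by (rule negligible_subset[OF Nneg]) (use diffN in \<open>auto simp: D_def S_def\<close>)
  define fd where "fd t = inner (gV (\<phi> t)) (dpath T \<phi> t)" for t
  have der: "((V \<circ> \<phi>) has_real_derivative fd t) (at t within {0..T})" if t: "t \<in> D" for t
  proof -
    have vd: "(\<phi> has_vector_derivative dpath T \<phi> t) (at t within S)"
      using t unfolding D_def dpath_def S_def by (auto simp: vector_derivative_works)
    have "((V \<circ> \<phi>) has_derivative (\<lambda>h. inner (gV (\<phi> t)) h) \<circ> (\<lambda>h. h *\<^sub>R dpath T \<phi> t)) (at t within S)"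
      using vd unfolding has_vector_derivative_def
      by (rule diff_chain_within) (rule has_derivative_at_withinI[OF V_grad])
    moreover have "(\<lambda>h. inner (gV (\<phi> t)) h) \<circ> (\<lambda>h. h *\<^sub>R dpath T \<phi> t) = (*) (fd t)"
      by (auto simp: fd_def fun_eq_iff)
    ultimately show ?thesis by (simp add: has_field_derivative_def S_def)
  qed
  have I1: "((\<lambda>t. if t \<in> D then fd t else 0) has_integral ((V \<circ> \<phi>) T - (V \<circ> \<phi>) 0)) {0..T}"
    by (rule ac_ftc[OF T acF Dneg DS der])
  have gi: "g integrable_on S" using gint set_lebesgue_integral_eq_integral(1) by blast
  have "(V \<circ> \<phi>) T - (V \<circ> \<phi>) 0 = integral S (\<lambda>t. if t \<in> D then fd t else 0)"
    using I1 by (simp add: S_def integral_unique)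
  also have "\<dots> \<le> integral S (\<lambda>t. (1/2) * g t)"
  proof (rule integral_le)
    show "(\<lambda>t. if t \<in> D then fd t else 0) integrable_on S" using I1 S_def by blast
    show "(\<lambda>t. (1/2) * g t) integrable_on S" using integrable_cmul[OF gi, of "1/2"] by simp
    show "(if t \<in> D then fd t else 0) \<le> (1/2) * g t" if "t \<in> S" for t
      using energy_alg[OF orth[of "\<phi> t"], of "dpath T \<phi> t"]
      by (auto simp: fd_def g_def c_def cfield_def)
  qed
  also have "\<dots> = (1/2) * integral S g" by simp
  also have "integral S g = (LINT t:{0..T}|lebesgue. (norm (dpath T \<phi> t - cfield gV b (\<phi> t)))\<^sup>2)"
    using set_lebesgue_integral_eq_integral(2)[OF gint] by (simp add: geq S_def)
  finally show "V (\<phi> T) - V (\<phi> 0) \<le> (1/2) * (LINT t:{0..T}|lebesgue. (norm (dpath T \<phi> t - cfield gV b (\<phi> t)))\<^sup>2)"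
    by simp
qed

lemma V_lower:
  fixes V :: "'a::euclidean_space \<Rightarrow> real" and gV :: "'a \<Rightarrow> 'a"
  assumes V_grad: "\<And>z. (V has_derivative (\<lambda>h. inner (gV z) h)) (at z)"
    and V_growth: "filterlim (\<lambda>z. inner (gV z) z / norm z) at_top at_infinity"
  shows "\<exists>B. \<forall>z. norm z \<le> V z + B"
proof -
  have "eventually (\<lambda>z. inner (gV z) z / norm z \<ge> 1) at_infinity"
    using V_growth by (simp add: filterlim_at_top)
  then obtain b0 where b0: "\<And>z. norm z \<ge> b0 \<Longrightarrow> inner (gV z) z / norm z \<ge> 1"
    unfolding eventually_at_infinity by blast
  define R where "R = max b0 1"
  have R: "R > 0" "R \<ge> b0" unfolding R_def by auto
  have Vc: "continuous_on UNIV V"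
    using V_grad by (meson continuous_at_imp_continuous_on has_derivative_continuous)
  have "compact (V ` cball 0 R)" by (intro compact_continuous_image continuous_on_subset[OF Vc]) auto
  then obtain M where M: "\<And>z. z \<in> cball 0 R \<Longrightarrow> \<bar>V z\<bar> \<le> M"
    using compact_imp_bounded[THEN bounded_iff[THEN iffD1]] by fastforce
  show ?thesis
  proof (intro exI allI)
    fix z :: 'a
    show "norm z \<le> V z + (R + M)"
    proof (cases "norm z \<le> R")
      case True
      then show ?thesis using M[of z] by auto
    next
      case False
      then have nz: "norm z > R" by simp
      then have z0: "z \<noteq> 0" using R by auto
      define u where "u = z /\<^sub>R norm z"
      have nu: "norm u = 1" using z0 by (simp add: u_def)
      define h where "h s = V (s *\<^sub>R u) - s" for s
      have hd: "(h has_real_derivative (inner (gV (s *\<^sub>R u)) u - 1)) (at s)" for s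
      proof -
        have "((\<lambda>s. V (s *\<^sub>R u)) has_derivative (\<lambda>h. inner (gV (s *\<^sub>R u)) (h *\<^sub>R u))) (at s)"
        proof -
          have d1: "((\<lambda>s. s *\<^sub>R u) has_derivative (\<lambda>h. h *\<^sub>R u)) (at s)"
            by (rule has_derivative_scaleR_left[OF has_derivative_ident])
          show ?thesis using diff_chain_at[OF d1 V_grad] by (simp add: o_def)
        qed
        then have "((\<lambda>s. V (s *\<^sub>R u)) has_real_derivative (inner (gV (s *\<^sub>R u)) u)) (at s)"
        proof -
          have "(\<lambda>h. inner (gV (s *\<^sub>R u)) (h *\<^sub>R u)) = (*) (inner (gV (s *\<^sub>R u)) u)"
            by (auto simp: fun_eq_iff)
          then show ?thesis using \<open>((\<lambda>s. V (s *\<^sub>R u)) has_derivative _) _\<close>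
            by (simp add: has_field_derivative_def)
        qed
        then show ?thesis unfolding h_def by (auto intro!: derivative_eq_intros)
      qed
      have "h R \<le> h (norm z)"
      proof (rule DERIV_nonneg_imp_increasing_open[of R "norm z" h])
        show "R \<le> norm z" using nz by simp
        show "continuous_on {R..norm z} h"
          using hd by (meson DERIV_continuous continuous_at_imp_continuous_on)
        fix s assume s: "R < s" "s < norm z"
        have "inner (gV (s *\<^sub>R u)) (s *\<^sub>R u) / norm (s *\<^sub>R u) \<ge> 1"
          using b0[of "s *\<^sub>R u"] s R nu by auto
        moreover have "inner (gV (s *\<^sub>R u)) (s *\<^sub>R u) / norm (s *\<^sub>R u) = inner (gV (s *\<^sub>R u)) u"
          using s R nu by simp
        ultimately show "\<exists>y. (h has_real_derivative y) (at s) \<and> 0 \<le> y"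
          using hd[of s] by auto
      qed
      moreover have "norm z *\<^sub>R u = z" using z0 by (simp add: u_def)
      moreover have "\<bar>V (R *\<^sub>R u)\<bar> \<le> M" using M[of "R *\<^sub>R u"] R nu by simp
      ultimately show ?thesis unfolding h_def by auto
    qed
  qed
qed

definition Wint :: "('a::euclidean_space \<Rightarrow> 'a) \<Rightarrow> 'a \<Rightarrow> 'a \<Rightarrow> real" where
  "Wint b P v = integral {0..1} (\<lambda>s. inner (b (P + s *\<^sub>R v)) v)"

definition lp :: "(int \<Rightarrow> 'a::real_normed_vector) \<Rightarrow> real \<Rightarrow> 'a" where
  "lp p u = p \<lfloor>u\<rfloor> + (u - of_int \<lfloor>u\<rfloor>) *\<^sub>R (p (\<lfloor>u\<rfloor> + 1) - p \<lfloor>u\<rfloor>)"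

definition ld :: "(int \<Rightarrow> 'a::real_normed_vector) \<Rightarrow> real \<Rightarrow> 'a" where
  "ld p u = p (\<lfloor>u\<rfloor> + 1) - p \<lfloor>u\<rfloor>"

lemma Wint_has_integral:
  assumes bc: "continuous_on UNIV b"
  shows "((\<lambda>s. inner (b (P + s *\<^sub>R v)) v) has_integral Wint b P v) {0..1}"
proof -
  have "continuous_on {0..1} (\<lambda>s. inner (b (P + s *\<^sub>R v)) v)"
    by (intro continuous_intros continuous_on_compose2[OF bc]) auto
  then show ?thesis unfolding Wint_def
    by (intro integrable_integral integrable_continuous_real)
qed

lemma Wint_bound:
  assumes bc: "continuous_on UNIV b" and M: "\<And>z. norm (b z) \<le> M"
  shows "\<bar>Wint b P v\<bar> \<le> M * norm v"
proof -
  have "norm (Wint b P v) \<le> (M * norm v) * measure lborel (cbox (0::real) 1)"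
  proof (rule has_integral_bound[OF _ Wint_has_integral[OF bc, unfolded box_real(2)[symmetric]]])
    have "0 \<le> M" using M[of 0] norm_ge_zero[of "b 0"] by linarith
    then show "0 \<le> M * norm v" by simp
    fix s show "norm (inner (b (P + s *\<^sub>R v)) v) \<le> M * norm v"
      using Cauchy_Schwarz_ineq2[of "b (P + s *\<^sub>R v)" v] M[of "P + s *\<^sub>R v"]
      by (simp add: mult_right_mono order_trans)
  qed
  then show ?thesis by simp
qed

lemma Wint_rev:
  assumes bc: "continuous_on UNIV b"
  shows "Wint b (P + v) (- v) = - Wint b P v"
proof -
  define f where "f = (\<lambda>s. inner (b (P + s *\<^sub>R v)) v)"
  have h1: "(f has_integral Wint b P v) {0..1}"
    using Wint_has_integral[OF bc] by (simp add: f_def)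
  have h2: "((\<lambda>x. f (- x)) has_integral Wint b P v) {-1..0}"
    using has_integral_reflect_lemma_real[OF h1] by simp
  have h3: "((\<lambda>x. f (- x)) \<circ> (+) (-1) has_integral Wint b P v) (cbox 0 1)"
    using has_integral_shift_cbox_iff[of "\<lambda>x. f (- x)" "-1" "Wint b P v" 0 1] h2 by simp
  have h4: "((\<lambda>s. - f (1 - s)) has_integral - Wint b P v) {0..1}"
    using has_integral_neg[OF h3] by (simp add: o_def)
  have "Wint b (P + v) (- v) = integral {0..1} (\<lambda>s. - f (1 - s))"
    unfolding Wint_def f_def by (intro integral_cong) (simp add: algebra_simps)
  also have "\<dots> = - Wint b P v" using h4 by (rule integral_unique)
  finally show ?thesis .
qed

lemma lp_on_unit:
  assumes "of_int j \<le> u" "u \<le> of_int j + 1"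
  shows "lp p u = p j + (u - of_int j) *\<^sub>R (p (j+1) - p j)"
proof (cases "u = of_int j + 1")
  case True
  then have "\<lfloor>u\<rfloor> = j + 1" by simp
  then show ?thesis using True by (simp add: lp_def algebra_simps)
next
  case False
  then have "\<lfloor>u\<rfloor> = j" using assms by (intro floor_unique) auto
  then show ?thesis by (simp add: lp_def)
qed

lemma ld_on_unit:
  assumes "of_int j \<le> u" "u < of_int j + 1"
  shows "ld p u = p (j+1) - p j"
proof -
  have "\<lfloor>u\<rfloor> = j" using assms by (intro floor_unique) auto
  then show ?thesis by (simp add: ld_def)
qed

lemma lp_cont_unit: "continuous_on {of_int j..of_int j + 1} (lp p)"
proof -
  have "continuous_on {of_int j..of_int j + 1} (\<lambda>u. p j + (u - of_int j) *\<^sub>R (p (j+1) - p j))"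
    by (intro continuous_intros)
  then show ?thesis
    by (rule continuous_on_eq) (auto simp: lp_on_unit)
qed

lemma lp_cont: "continuous_on UNIV (lp p)"
proof -
  have "isCont (lp p) u" for u
  proof -
    define j where "j = \<lfloor>u\<rfloor>"
    have "continuous_on ({of_int (j-1)..of_int (j-1) + 1} \<union> {of_int j..of_int j + 1}) (lp p)"
      by (intro continuous_on_closed_Un lp_cont_unit) auto
    moreover have "{of_int (j-1)..of_int (j-1) + 1} \<union> {of_int j..of_int j + 1} = {of_int j - 1..of_int j + 1::real}"
      by auto
    ultimately have c: "continuous_on {of_int j - 1..of_int j + 1::real} (lp p)" by simp
    have "u \<in> interior {of_int j - 1..of_int j + 1::real}"
      unfolding interior_atLeastAtMost_real j_def greaterThanLessThan_iff
    proof -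
      have "real_of_int \<lfloor>u\<rfloor> \<le> u" "u < real_of_int \<lfloor>u\<rfloor> + 1" using floor_correct[of u] by auto
      then show "real_of_int \<lfloor>u\<rfloor> - 1 < u \<and> u < real_of_int \<lfloor>u\<rfloor> + 1" by linarith
    qed
    then show ?thesis by (rule continuous_on_interior[OF c])
  qed
  then show ?thesis by (simp add: continuous_at_imp_continuous_on)
qed

lemma lp_deriv:
  assumes "u \<notin> \<int>"
  shows "(lp p has_vector_derivative ld p u) (at u)"
proof -
  define j where "j = \<lfloor>u\<rfloor>"
  have ju: "of_int j < u" "u < of_int j + 1"
    using assms unfolding j_def
    using floor_correct[of u] by (metis Ints_of_int order_le_less) (use floor_correct[of u] in simp)
  have d: "((\<lambda>u. p j + (u - of_int j) *\<^sub>R (p (j+1) - p j)) has_vector_derivative (p (j+1) - p j)) (at u)"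
    by (auto intro!: derivative_eq_intros)
  show ?thesis
  proof (rule has_vector_derivative_transform_within_open[OF _ _ _ , of _ _ _ "{of_int j<..<of_int j + 1}"])
    show "((\<lambda>u. p j + (u - of_int j) *\<^sub>R (p (j+1) - p j)) has_vector_derivative ld p u) (at u)"
      using d ld_on_unit[of j u p] ju by simp
  qed (use ju in \<open>auto intro: lp_on_unit[symmetric]\<close>)
qed

definition kfun :: "('a::euclidean_space \<Rightarrow> 'a) \<Rightarrow> (int \<Rightarrow> 'a) \<Rightarrow> real \<Rightarrow> real" where
  "kfun b p u = inner (b (lp p u)) (ld p u)"

definition wfun :: "('a::euclidean_space \<Rightarrow> 'a) \<Rightarrow> (int \<Rightarrow> 'a) \<Rightarrow> int \<Rightarrow> real" where
  "wfun b p j = Wint b (p j) (p (j + 1) - p j)"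

lemma pshift:
  fixes p :: "int \<Rightarrow> 'a" and j k :: int
  assumes pper: "\<And>j. p j = p (j mod 3)"
  shows "p (j + 3 * k) = p j"
  by (subst pper, subst (2) pper) simp

lemma ld_bound:
  assumes pper: "\<And>j. p j = p (j mod 3)"
  shows "norm (ld p u) \<le> norm (p 1 - p 0) + norm (p 2 - p 1) + norm (p 0 - p 2)"
proof -
  define j where "j = \<lfloor>u\<rfloor>"
  have "ld p u = p ((j mod 3 + 1) mod 3) - p (j mod 3)"
    unfolding ld_def j_def[symmetric]
    by (subst pper, subst (2) pper) (simp add: mod_add_left_eq)
  moreover have "j mod 3 = 0 \<or> j mod 3 = 1 \<or> j mod 3 = 2" by presburger
  ultimately show ?thesis by auto
qed

lemma lp_bound:
  assumes pper: "\<And>j. p j = p (j mod 3)"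
  shows "norm (lp p u) \<le> norm (p 0) + norm (p 1) + norm (p 2)"
proof -
  define j where "j = \<lfloor>u\<rfloor>"
  define t where "t = u - of_int j"
  have fl: "of_int \<lfloor>u\<rfloor> \<le> u" "u < of_int \<lfloor>u\<rfloor> + 1" using floor_correct[of u] by auto
  have t: "0 \<le> t" "t \<le> 1" unfolding t_def j_def using fl by linarith+
  have pb: "norm (p i) \<le> norm (p 0) + norm (p 1) + norm (p 2)" for i
  proof -
    have "i mod 3 = 0 \<or> i mod 3 = 1 \<or> i mod 3 = 2" by presburger
    then show ?thesis by (subst pper) auto
  qed
  have "lp p u = (1 - t) *\<^sub>R p j + t *\<^sub>R p (j + 1)"
    unfolding lp_def j_def[symmetric] t_def[symmetric] by (simp add: algebra_simps)
  then have "norm (lp p u) \<le> (1 - t) * norm (p j) + t * norm (p (j + 1))"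
    using t by (metis abs_of_nonneg diff_ge_0_iff_ge norm_scaleR norm_triangle_ineq order_trans
        add_mono order_refl)
  also have "\<dots> \<le> (1 - t) * (norm (p 0) + norm (p 1) + norm (p 2)) + t * (norm (p 0) + norm (p 1) + norm (p 2))"
    using t pb by (intro add_mono mult_left_mono) auto
  also have "\<dots> = norm (p 0) + norm (p 1) + norm (p 2)" by (simp add: algebra_simps)
  finally show ?thesis .
qed

lemma lp_lip:
  fixes p :: "int \<Rightarrow> 'a::euclidean_space"
  assumes L: "\<And>u. norm (ld p u) \<le> L"
  shows "norm (lp p v - lp p u) \<le> L * \<bar>v - u\<bar>"
proof -
  have main: "norm (lp p v - lp p u) \<le> L * (v - u)" if uv: "u \<le> v" for u v
  proof -
    have fin: "finite {x \<in> {u..v}. x \<in> \<int>}"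
    proof (rule finite_subset[of _ "of_int ` {\<lfloor>u\<rfloor>..\<lceil>v\<rceil>}"])
      show "{x \<in> {u..v}. x \<in> \<int>} \<subseteq> of_int ` {\<lfloor>u\<rfloor>..\<lceil>v\<rceil>}"
      proof
        fix x assume "x \<in> {x \<in> {u..v}. x \<in> \<int>}"
        then obtain n where n: "x = of_int n" "u \<le> of_int n" "of_int n \<le> v" by (auto elim: Ints_cases)
        then have "\<lfloor>u\<rfloor> \<le> n" "n \<le> \<lceil>v\<rceil>" by (auto simp: floor_le_iff le_ceiling_iff)
        then show "x \<in> of_int ` {\<lfloor>u\<rfloor>..\<lceil>v\<rceil>}" using n by auto
      qed
    qed auto
    have "(ld p has_integral (lp p v - lp p u)) {u..v}"
    proof (rule fundamental_theorem_of_calculus_interior_strong[OF fin uv])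
      show "continuous_on {u..v} (lp p)" using lp_cont continuous_on_subset by blast
      fix x assume "x \<in> {u<..<v} - {x \<in> {u..v}. x \<in> \<int>}"
      then have "x \<notin> \<int>" by auto
      then show "(lp p has_vector_derivative ld p x) (at x)" by (rule lp_deriv)
    qed
    moreover have L0: "0 \<le> L" using L[of 0] norm_ge_zero order_trans by blast
    ultimately have "norm (lp p v - lp p u) \<le> L * measure lborel (cbox u v)"
      using has_integral_bound[of L "ld p" "lp p v - lp p u" u v] L by simp
    then show ?thesis using uv by simp
  qed
  show ?thesis
  proof (cases "u \<le> v")
    case True then show ?thesis using main[OF True] by simp
  next
    case False
    then have "norm (lp p u - lp p v) \<le> L * (u - v)" using main[of v u] by simp
    then show ?thesis using False by (simp add: norm_minus_commute)
  qed
qed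

lemma k_unit:
  assumes bc: "continuous_on UNIV b"
  shows "(kfun b p has_integral wfun b p j) {of_int j..of_int j + 1}"
proof -
  define v where "v = p (j + 1) - p j"
  define g where "g = (\<lambda>u. inner (b (p j + (u - of_int j) *\<^sub>R v)) v)"
  have "((\<lambda>s. inner (b (p j + s *\<^sub>R v)) v) has_integral wfun b p j) (cbox 0 1)"
    using Wint_has_integral[OF bc] by (simp add: wfun_def v_def)
  moreover have "(\<lambda>s. inner (b (p j + s *\<^sub>R v)) v) = g \<circ> (+) (of_int j)"
    by (simp add: g_def o_def fun_eq_iff)
  ultimately have "(g has_integral wfun b p j) (cbox (0 + of_int j) (1 + of_int j))"
    using has_integral_shift_cbox_iff by metis
  then have g: "(g has_integral wfun b p j) {of_int j..of_int j + 1}" by (simp add: add.commute)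
  show ?thesis
  proof (rule has_integral_spike[OF _ _ g])
    show "negligible {of_int j, of_int j + 1::real}" by simp
    fix u assume "u \<in> {of_int j..of_int j + 1} - {of_int j, of_int j + 1::real}"
    then have u: "of_int j \<le> u" "u < of_int j + 1" "u \<le> of_int j + 1" by auto
    show "kfun b p u = g u"
      unfolding kfun_def g_def v_def by (simp add: lp_on_unit[OF u(1) u(3)] ld_on_unit[OF u(1) u(2)])
  qed
qed

lemma k_nat:
  assumes bc: "continuous_on UNIV b"
  shows "(kfun b p has_integral (\<Sum>i<n. wfun b p (int i))) {0..real n}"
proof (induction n)
  case 0
  then show ?case using has_integral_refl(1)[of "kfun b p" 0] by simp
next
  case (Suc n)
  have "(kfun b p has_integral wfun b p (int n)) {real n..real n + 1}"
    using k_unit[OF bc, of p "int n"] by simp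
  then have "(kfun b p has_integral (\<Sum>i<n. wfun b p (int i)) + wfun b p (int n)) {0..real n + 1}"
    using has_integral_combine[of 0 "real n" "real n + 1", OF _ _ Suc.IH] by simp
  then show ?case by (simp add: add.commute)
qed

lemma k_integrable:
  assumes bc: "continuous_on UNIV b"
  shows "kfun b p integrable_on {0..\<theta>}"
proof (cases "\<theta> \<ge> 0")
  case True
  have "kfun b p integrable_on {0..real (nat \<lceil>\<theta>\<rceil>)}" using k_nat[OF bc] by blast
  then show ?thesis
    by (rule integrable_subinterval_real) (use True in \<open>auto simp: real_nat_ceiling_ge\<close>)
next
  case False
  then have "{0..\<theta>} = {}" by auto
  then show ?thesis by (simp add: integrable_on_empty)
qed

lemma wsum:
  assumes pper: "\<And>j. p j = p (j mod 3)"
  shows "(\<Sum>i<3*m. wfun b p (int i)) = real m * (wfun b p 0 + wfun b p 1 + wfun b p 2)"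
proof (induction m)
  case 0 then show ?case by simp
next
  case (Suc m)
  have w: "wfun b p (int (3*m + r)) = wfun b p (int r)" for r
  proof -
    have "int (3*m + r) = int r + 3 * int m" by simp
    then show ?thesis unfolding wfun_def
      using pshift[where p=p, OF pper, of "int r" "int m"] pshift[where p=p, OF pper, of "int r + 1" "int m"]
      by (simp add: algebra_simps)
  qed
  have e3: "3 * Suc m = Suc (Suc (Suc (3 * m)))" by simp
  have "(\<Sum>i<3 * Suc m. wfun b p (int i)) = (\<Sum>i<3*m. wfun b p (int i))
      + wfun b p (int (3*m)) + wfun b p (int (Suc (3*m))) + wfun b p (int (Suc (Suc (3*m))))"
    unfolding e3 sum.lessThan_Suc by simp
  also have "\<dots> = (\<Sum>i<3*m. wfun b p (int i))
      + wfun b p (int (3*m + 0)) + wfun b p (int (3*m + 1)) + wfun b p (int (3*m + 2))"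
    by simp
  also have "\<dots> = (\<Sum>i<3*m. wfun b p (int i)) + wfun b p 0 + wfun b p 1 + wfun b p 2"
    unfolding w by simp
  finally
  have "(\<Sum>i<3 * Suc m. wfun b p (int i)) = (\<Sum>i<3*m. wfun b p (int i)) + wfun b p 0 + wfun b p 1 + wfun b p 2" .
  then show ?case using Suc by (simp add: algebra_simps)
qed

lemma loop_ivt:
  assumes bc: "continuous_on UNIV b" and pper: "\<And>j. p j = p (j mod 3)"
    and \<kappa>: "\<kappa> = wfun b p 0 + wfun b p 1 + wfun b p 2" "\<kappa> \<noteq> 0" and A: "A / \<kappa> \<ge> 0"
  shows "\<exists>\<theta>. 0 \<le> \<theta> \<and> \<theta> \<le> 3 * (A / \<kappa> + 1) \<and> integral {0..\<theta>} (kfun b p) = A"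
proof -
  define m where "m = nat \<lceil>A / \<kappa>\<rceil>"
  have m1: "A / \<kappa> \<le> real m" unfolding m_def by (simp add: real_nat_ceiling_ge)
  have m2: "real m \<le> A / \<kappa> + 1" unfolding m_def using A by (simp add: of_nat_nat ceiling_correct[of "A/\<kappa>"] less_imp_le)
  define G where "G \<theta> = integral {0..\<theta>} (kfun b p)" for \<theta>
  have G0: "G 0 = 0" by (simp add: G_def)
  have "G (real (3*m)) = real m * \<kappa>"
    unfolding G_def using integral_unique[OF k_nat[OF bc, of p "3*m"]] wsum[where p=p and b=b and m=m, OF pper] \<kappa>(1)
    by (simp add: mult.commute)
  then have G3: "G (3 * real m) = real m * \<kappa>" by simp
  have Gc: "continuous_on {0..3 * real m} G"
    unfolding G_def by (rule indefinite_integral_continuous_1[OF k_integrable[OF bc]])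
  have "\<exists>\<theta>\<ge>0. \<theta> \<le> 3 * real m \<and> G \<theta> = A"
  proof (cases "\<kappa> > 0")
    case True
    then have "A \<ge> 0" using A by (simp add: zero_le_divide_iff)
    moreover have "A \<le> real m * \<kappa>" using m1 True by (simp add: divide_le_eq)
    ultimately show ?thesis using G0 G3 by (intro IVT'[OF _ _ _ Gc]) auto
  next
    case False
    then have neg: "\<kappa> < 0" using \<kappa>(2) by simp
    then have "A \<le> 0" using A by (simp add: zero_le_divide_iff)
    moreover have "real m * \<kappa> \<le> A" using m1 neg by (simp add: divide_le_eq)
    ultimately show ?thesis using G0 G3 by (intro IVT2'[OF _ _ _ Gc]) auto
  qed
  then obtain \<theta> where "0 \<le> \<theta>" "\<theta> \<le> 3 * real m" "G \<theta> = A" by blast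
  then show ?thesis using m2 by (intro exI[of _ \<theta>]) (auto simp: G_def)
qed

lemma path_props:
  fixes x0 :: "'a::euclidean_space" and p :: "int \<Rightarrow> 'a"
  assumes pper: "\<And>j. p j = p (j mod 3)" and p0: "p 0 = 0" and \<omega>: "\<omega> \<ge> 0" and T: "T \<ge> 2"
    and \<psi>_def: "\<psi> = (\<lambda>t. if t \<le> 1 then (1 - t) *\<^sub>R x0 else lp p (\<omega> * (t - 1)))"
    and D\<psi>_def: "D\<psi> = (\<lambda>t. if t < 1 then - x0 else \<omega> *\<^sub>R ld p (\<omega> * (t - 1)))"
    and E_def: "E = {0, 1, T} \<union> range (\<lambda>j::int. 1 + of_int j / \<omega>)"
    and L\<psi>_def: "L\<psi> = norm x0 + \<omega> * (norm (p 1 - p 0) + norm (p 2 - p 1) + norm (p 0 - p 2))"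
  shows "negligible E"
    and "\<And>s t. s \<in> {0..T} \<Longrightarrow> t \<in> {0..T} \<Longrightarrow> norm (\<psi> s - \<psi> t) \<le> L\<psi> * \<bar>s - t\<bar>"
    and "\<And>t. t \<in> {0..T} - E \<Longrightarrow> (\<psi> has_vector_derivative D\<psi> t) (at t)"
    and "\<And>t. norm (D\<psi> t) \<le> L\<psi>"
    and "\<And>t. t \<in> {0..T} \<Longrightarrow> norm (\<psi> t) \<le> norm x0 + (norm (p 0) + norm (p 1) + norm (p 2))"
    and "\<psi> 0 = x0"
    and "L\<psi> \<ge> 0"
proof -
  define Lp where "Lp = norm (p 1 - p 0) + norm (p 2 - p 1) + norm (p 0 - p 2)"
  have Lp: "\<And>u. norm (ld p u) \<le> Lp" unfolding Lp_def by (rule ld_bound[where p=p, OF pper])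
  have Lp0: "Lp \<ge> 0" unfolding Lp_def by simp
  have L\<psi>: "L\<psi> = norm x0 + \<omega> * Lp" unfolding L\<psi>_def Lp_def ..
  show L0: "L\<psi> \<ge> 0" unfolding L\<psi> using \<omega> Lp0 by simp
  have lp0: "lp p 0 = 0" using p0 by (simp add: lp_def)
  have \<psi>1: "\<psi> t = (1 - t) *\<^sub>R x0" if "t \<le> 1" for t using that by (simp add: \<psi>_def)
  have \<psi>2: "\<psi> t = lp p (\<omega> * (t - 1))" if "t \<ge> 1" for t
    using that lp0 by (cases "t = 1") (auto simp: \<psi>_def)
  show neg: "negligible E"
    unfolding E_def by (intro negligible_Un negligible_countable) auto
  have lipA: "norm (\<psi> s - \<psi> t) \<le> L\<psi> * \<bar>s - t\<bar>" if "s \<le> 1" "t \<le> 1" for s t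
  proof -
    have "\<psi> s - \<psi> t = (t - s) *\<^sub>R x0" using that by (simp add: \<psi>1 algebra_simps)
    then have "norm (\<psi> s - \<psi> t) = \<bar>s - t\<bar> * norm x0" by (simp add: abs_minus_commute)
    also have "\<dots> \<le> \<bar>s - t\<bar> * L\<psi>" using \<omega> Lp0 by (intro mult_left_mono) (auto simp: L\<psi>)
    finally show ?thesis by (simp add: mult.commute)
  qed
  have lipB: "norm (\<psi> s - \<psi> t) \<le> L\<psi> * \<bar>s - t\<bar>" if "s \<ge> 1" "t \<ge> 1" for s t
  proof -
    have "norm (\<psi> s - \<psi> t) \<le> Lp * \<bar>\<omega> * (s - 1) - \<omega> * (t - 1)\<bar>"
      using that lp_lip[OF Lp] by (simp add: \<psi>2)
    also have "\<bar>\<omega> * (s - 1) - \<omega> * (t - 1)\<bar> = \<omega> * \<bar>s - t\<bar>"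
      using \<omega> by (simp add: abs_mult right_diff_distrib[symmetric])
    also have "Lp * (\<omega> * \<bar>s - t\<bar>) = (\<omega> * Lp) * \<bar>s - t\<bar>" by simp
    also have "\<dots> \<le> L\<psi> * \<bar>s - t\<bar>" by (intro mult_right_mono) (auto simp: L\<psi>)
    finally show ?thesis .
  qed
  show lip: "norm (\<psi> s - \<psi> t) \<le> L\<psi> * \<bar>s - t\<bar>" if "s \<in> {0..T}" "t \<in> {0..T}" for s t
  proof -
    have gen: "norm (\<psi> s - \<psi> t) \<le> L\<psi> * \<bar>s - t\<bar>" if st: "s \<le> t" for s t
    proof (cases "t \<le> 1")
      case True then show ?thesis using lipA[of s t] st by simp
    next
      case False
      show ?thesis
      proof (cases "s \<ge> 1")
        case True then show ?thesis using lipB[of s t] False by simp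
      next
        case s1: False
        have "norm (\<psi> s - \<psi> t) \<le> norm (\<psi> s - \<psi> 1) + norm (\<psi> 1 - \<psi> t)"
          using norm_triangle_ineq[of "\<psi> s - \<psi> 1" "\<psi> 1 - \<psi> t"] by simp
        also have "\<dots> \<le> L\<psi> * \<bar>s - 1\<bar> + L\<psi> * \<bar>1 - t\<bar>"
          using lipA[of s 1] lipB[of 1 t] s1 False by (intro add_mono) auto
        also have "\<dots> = L\<psi> * \<bar>s - t\<bar>" using s1 False by (simp add: algebra_simps abs_if)
        finally show ?thesis .
      qed
    qed
    show ?thesis
    proof (cases "s \<le> t")
      case True then show ?thesis by (rule gen)
    next
      case False
      then have "norm (\<psi> t - \<psi> s) \<le> L\<psi> * \<bar>t - s\<bar>" using gen[of t s] by simp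
      then show ?thesis by (simp add: norm_minus_commute abs_minus_commute)
    qed
  qed
  show "norm (D\<psi> t) \<le> L\<psi>" for t
  proof (cases "t < 1")
    case True then show ?thesis by (simp add: D\<psi>_def L\<psi> \<omega> Lp0)
  next
    case False
    then have "norm (D\<psi> t) = \<omega> * norm (ld p (\<omega> * (t - 1)))" using \<omega> by (simp add: D\<psi>_def)
    also have "\<dots> \<le> \<omega> * Lp" using \<omega> Lp by (intro mult_left_mono) auto
    also have "\<dots> \<le> L\<psi>" by (simp add: L\<psi>)
    finally show ?thesis .
  qed
  show "norm (\<psi> t) \<le> norm x0 + (norm (p 0) + norm (p 1) + norm (p 2))" if "t \<in> {0..T}" for t
  proof (cases "t \<le> 1")
    case True
    then have "norm (\<psi> t) = (1 - t) * norm x0" using that by (simp add: \<psi>1)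
    also have "\<dots> \<le> norm x0" using that True by (simp add: mult_le_cancel_right2)
    finally show ?thesis by (simp add: add_increasing2)
  next
    case False
    then have "norm (\<psi> t) \<le> norm (p 0) + norm (p 1) + norm (p 2)"
      using lp_bound[where p=p, OF pper] by (simp add: \<psi>2)
    moreover have "0 \<le> norm x0" by simp
    ultimately show ?thesis by linarith
  qed
  show "\<psi> 0 = x0" by (simp add: \<psi>_def)
  show "(\<psi> has_vector_derivative D\<psi> t) (at t)" if t: "t \<in> {0..T} - E" for t
  proof (cases "t < 1")
    case True
    have d: "((\<lambda>t. (1 - t) *\<^sub>R x0) has_vector_derivative - x0) (at t)"
      by (auto intro!: derivative_eq_intros)
    have "(\<psi> has_vector_derivative - x0) (at t)"
      by (rule has_vector_derivative_transform_within_open[OF d, of "{..<1}"])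
         (use True in \<open>auto simp: \<psi>1\<close>)
    then show ?thesis using True by (simp add: D\<psi>_def)
  next
    case False
    then have t1: "t > 1" using t unfolding E_def by auto
    have "((\<lambda>t. lp p (\<omega> * (t - 1))) has_vector_derivative \<omega> *\<^sub>R ld p (\<omega> * (t - 1))) (at t)"
    proof (cases "\<omega> = 0")
      case True
      then show ?thesis by (simp add: has_vector_derivative_const)
    next
      case False
      have nz: "\<omega> * (t - 1) \<notin> \<int>"
      proof
        assume "\<omega> * (t - 1) \<in> \<int>"
        then obtain j where j: "\<omega> * (t - 1) = of_int j" by (auto elim: Ints_cases)
        then have "t = 1 + of_int j / \<omega>" using False by (simp add: field_simps)
        then show False using t unfolding E_def by auto
      qed
      have d1: "((\<lambda>t. \<omega> * (t - 1)) has_vector_derivative \<omega>) (at t)"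
        by (auto intro!: derivative_eq_intros simp: has_real_derivative_iff_has_vector_derivative[symmetric])
      have "((lp p \<circ> (\<lambda>t. \<omega> * (t - 1))) has_vector_derivative \<omega> *\<^sub>R ld p (\<omega> * (t - 1))) (at t)"
        using vector_diff_chain_within[OF d1, of "lp p" "ld p (\<omega> * (t - 1))"]
          has_vector_derivative_at_within[OF lp_deriv[where p=p, OF nz]] by simp
      then show ?thesis by (simp add: o_def)
    qed
    then have "(\<psi> has_vector_derivative \<omega> *\<^sub>R ld p (\<omega> * (t - 1))) (at t)"
      by (rule has_vector_derivative_transform_within_open[of _ _ _ "{1<..}"])
         (use t1 in \<open>auto simp: \<psi>2\<close>)
    then show ?thesis using t1 by (simp add: D\<psi>_def)
  qed
qed

lemma meas_norm_sq_diff: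
  fixes f g :: "real \<Rightarrow> 'a::euclidean_space"
  shows "f measurable_on {a..b} \<Longrightarrow> g measurable_on {a..b} \<Longrightarrow> (\<lambda>t. (norm (f t - g t))^2) measurable_on {a..b}"
  by (simp add: measurable_on_iff_borel_measurable) measurable

lemma meas_inner:
  fixes f g :: "real \<Rightarrow> 'a::euclidean_space"
  shows "f measurable_on {a..b} \<Longrightarrow> g measurable_on {a..b} \<Longrightarrow> (\<lambda>t. inner (f t) (g t)) measurable_on {a..b}"
  by (simp add: measurable_on_iff_borel_measurable) measurable

lemma path_H:
  fixes x0 :: "'a::euclidean_space" and p :: "int \<Rightarrow> 'a"
  assumes pper: "\<And>j. p j = p (j mod 3)" and p0: "p 0 = 0" and \<omega>: "\<omega> \<ge> 0" and T: "T \<ge> 2"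
    and \<psi>_def: "\<psi> = (\<lambda>t. if t \<le> 1 then (1 - t) *\<^sub>R x0 else lp p (\<omega> * (t - 1)))"
    and D\<psi>_def: "D\<psi> = (\<lambda>t. if t < 1 then - x0 else \<omega> *\<^sub>R ld p (\<omega> * (t - 1)))"
    and E_def: "E = {0, 1, T} \<union> range (\<lambda>j::int. 1 + of_int j / \<omega>)"
    and L\<psi>_def: "L\<psi> = norm x0 + \<omega> * (norm (p 1 - p 0) + norm (p 2 - p 1) + norm (p 0 - p 2))"
  shows "\<psi> \<in> H_Tx T x0"
    and "\<And>t. t \<in> {0..T} - E \<Longrightarrow> dpath T \<psi> t = D\<psi> t"
    and "dpath T \<psi> measurable_on {0..T}"
    and "continuous_on {0..T} \<psi>"
proof -
  note P = path_props[OF pper p0 \<omega> T \<psi>_def D\<psi>_def E_def L\<psi>_def]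
  have T0: "T > 0" using T by simp
  have ac: "abs_cont_on 0 T \<psi>"
    by (rule lip_ac[OF P(7)]) (rule P(2))
  show cont: "continuous_on {0..T} \<psi>" by (rule ac_continuous[OF ac])
  show dp: "dpath T \<psi> t = D\<psi> t" if t: "t \<in> {0..T} - E" for t
    unfolding dpath_def
    by (rule vector_derivative_within_closed_interval[OF T0])
       (use t has_vector_derivative_at_within[OF P(3)[OF t]] in auto)
  have diffE: "\<psi> differentiable (at t within {0..T})" if "t \<in> {0..T} - E" for t
    using differentiableI_vector[OF has_vector_derivative_at_within[OF P(3)[OF that]]] .
  show dm: "dpath T \<psi> measurable_on {0..T}"
    by (rule dpath_measurable[OF T0 cont P(1) diffE])
  have ae: "AE t in lebesgue. t \<in> {0..T} \<longrightarrow> \<psi> differentiable (at t within {0..T})"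
  proof (rule AE_I')
    show "E \<in> null_sets lebesgue" using P(1) by (simp add: negligible_iff_null_sets)
    show "{t \<in> space lebesgue. \<not> (t \<in> {0..T} \<longrightarrow> \<psi> differentiable (at t within {0..T}))} \<subseteq> E"
      using diffE by auto
  qed
  have sq: "set_integrable lebesgue {0..T} (\<lambda>t. (norm (dpath T \<psi> t))\<^sup>2)"
  proof (rule abs_int_bound_ae[OF _ P(1)])
    show "(\<lambda>t. (norm (dpath T \<psi> t))\<^sup>2) measurable_on {0..T}"
      using meas_norm_sq_diff[OF dm measurable_on_Icc_cont[OF continuous_on_const[of _ 0]]] by simp
    fix t assume t: "t \<in> {0..T} - E"
    have "(norm (dpath T \<psi> t))\<^sup>2 \<le> L\<psi>\<^sup>2"
      using P(4)[of t] dp[OF t] by (intro power_mono) auto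
    then show "norm ((norm (dpath T \<psi> t))\<^sup>2) \<le> L\<psi>\<^sup>2" by simp
  qed
  show "\<psi> \<in> H_Tx T x0"
    unfolding H_Tx_def H_T_def using ac ae sq P(6) by auto
qed

lemma path_L:
  fixes x0 :: "'a::euclidean_space" and p :: "int \<Rightarrow> 'a" and b :: "'a \<Rightarrow> 'a"
  assumes bc: "continuous_on UNIV b" and M: "\<And>z. norm (b z) \<le> M"
    and pper: "\<And>j. p j = p (j mod 3)" and p0: "p 0 = 0" and \<omega>: "\<omega> \<ge> 0" and T: "T \<ge> 2"
    and \<psi>_def: "\<psi> = (\<lambda>t. if t \<le> 1 then (1 - t) *\<^sub>R x0 else lp p (\<omega> * (t - 1)))"
    and D\<psi>_def: "D\<psi> = (\<lambda>t. if t < 1 then - x0 else \<omega> *\<^sub>R ld p (\<omega> * (t - 1)))"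
    and E_def: "E = {0, 1, T} \<union> range (\<lambda>j::int. 1 + of_int j / \<omega>)"
    and L\<psi>_def: "L\<psi> = norm x0 + \<omega> * (norm (p 1 - p 0) + norm (p 2 - p 1) + norm (p 0 - p 2))"
  shows "(LINT t:{0..T}|lebesgue. inner (b (\<psi> t)) (dpath T \<psi> t)) = Wint b x0 (- x0) + integral {0..\<omega> * (T - 1)} (kfun b p)"
proof -
  note P = path_props[OF pper p0 \<omega> T \<psi>_def D\<psi>_def E_def L\<psi>_def]
  note H = path_H[OF pper p0 \<omega> T \<psi>_def D\<psi>_def E_def L\<psi>_def]
  define S where "S = {0..T}"
  define f where "f t = inner (b (\<psi> t)) (dpath T \<psi> t)" for t
  define f' where "f' t = inner (b (\<psi> t)) (D\<psi> t)" for t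
  have b\<psi>: "continuous_on {0..T} (\<lambda>t. b (\<psi> t))"
    by (rule continuous_on_compose2[OF bc H(4)]) auto
  have fm: "f measurable_on {0..T}"
    unfolding f_def by (rule meas_inner[OF measurable_on_Icc_cont[OF b\<psi>] H(3)])
  have M0: "M \<ge> 0" using M[of 0] norm_ge_zero order_trans by blast
  have fi: "f absolutely_integrable_on {0..T}"
  proof (rule abs_int_bound_ae[OF fm P(1)])
    fix t assume t: "t \<in> {0..T} - E"
    have "norm (f t) \<le> norm (b (\<psi> t)) * norm (D\<psi> t)"
      unfolding f_def H(2)[OF t] by (simp add: Cauchy_Schwarz_ineq2)
    also have "\<dots> \<le> M * L\<psi>" using M P(4) M0 by (intro mult_mono) auto
    finally show "norm (f t) \<le> M * L\<psi>" .
  qed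
  have "(LINT t:{0..T}|lebesgue. inner (b (\<psi> t)) (dpath T \<psi> t)) = integral S f"
    using set_lebesgue_integral_eq_integral(2)[OF fi] by (simp add: f_def S_def)
  also have "integral S f = integral S f'"
    unfolding S_def by (rule integral_spike[OF P(1)]) (simp add: f_def f'_def H(2))
  finally have L1: "(LINT t:{0..T}|lebesgue. inner (b (\<psi> t)) (dpath T \<psi> t)) = integral S f'" .
  have f'i: "f' integrable_on {0..T}"
    using integrable_spike[OF set_lebesgue_integral_eq_integral(1)[OF fi] P(1)]
    by (simp add: f_def f'_def H(2))
  have split: "integral {0..1} f' + integral {1..T} f' = integral {0..T} f'"
    using T by (intro Henstock_Kurzweil_Integration.integral_combine[OF _ _ f'i]) auto
  have I1: "integral {0..1} f' = Wint b x0 (- x0)"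
    unfolding Wint_def
  proof (rule integral_spike[of "{1}"])
    fix t assume "t \<in> {0..1} - {1::real}"
    then have "t < 1" by auto
    then show "inner (b (x0 + t *\<^sub>R - x0)) (- x0) = f' t"
      by (simp add: f'_def \<psi>_def D\<psi>_def algebra_simps)
  qed auto
  have I2: "integral {1..T} f' = integral {1..T} (\<lambda>t. \<omega> * kfun b p (\<omega> * (t - 1)))"
  proof (rule integral_spike[of "{1}"])
    fix t assume "t \<in> {1..T} - {1::real}"
    then have "t > 1" by auto
    then show "\<omega> * kfun b p (\<omega> * (t - 1)) = f' t"
      by (simp add: f'_def \<psi>_def D\<psi>_def kfun_def)
  qed auto
  have I3: "integral {1..T} (\<lambda>t. \<omega> * kfun b p (\<omega> * (t - 1))) = integral {0..\<omega> * (T - 1)} (kfun b p)"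
  proof (cases "\<omega> = 0")
    case True then show ?thesis by simp
  next
    case False
    then have \<omega>p: "\<omega> > 0" using \<omega> by simp
    define \<theta> where "\<theta> = \<omega> * (T - 1)"
    have "(kfun b p has_integral integral {0..\<theta>} (kfun b p)) (cbox 0 \<theta>)"
      using k_integrable[OF bc] by (simp add: integrable_integral)
    then have F: "((\<lambda>x. kfun b p (\<omega> *\<^sub>R x + - \<omega>)) has_integral (integral {0..\<theta>} (kfun b p) /\<^sub>R \<omega> ^ DIM(real)))
           (cbox ((0 - - \<omega>) /\<^sub>R \<omega>) ((\<theta> - - \<omega>) /\<^sub>R \<omega>))"
      by (rule has_integral_affinity'[OF _ \<omega>p])
    have e1: "cbox ((0 - - \<omega>) /\<^sub>R \<omega>) ((\<theta> - - \<omega>) /\<^sub>R \<omega>) = {1..T}"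
    proof -
      have "(0 - - \<omega>) /\<^sub>R \<omega> = 1" using \<omega>p by simp
      moreover have "(\<theta> - - \<omega>) /\<^sub>R \<omega> = T" using \<omega>p unfolding \<theta>_def
        by (simp add: divide_simps) (simp add: algebra_simps)
      ultimately show ?thesis by simp
    qed
    have e2: "(\<lambda>x. kfun b p (\<omega> *\<^sub>R x + - \<omega>)) = (\<lambda>x. kfun b p (\<omega> * (x - 1)))"
      by (simp add: algebra_simps)
    have e3: "integral {0..\<theta>} (kfun b p) /\<^sub>R \<omega> ^ DIM(real) = integral {0..\<theta>} (kfun b p) / \<omega>"
      by (simp add: divide_inverse mult.commute)
    have "((\<lambda>x. kfun b p (\<omega> * (x - 1))) has_integral (integral {0..\<theta>} (kfun b p) / \<omega>)) {1..T}"
      using F unfolding e1 e2 e3 .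
    from has_integral_mult_right[OF this, of \<omega>]
    have "((\<lambda>t. \<omega> * kfun b p (\<omega> * (t - 1))) has_integral integral {0..\<theta>} (kfun b p)) {1..T}"
      using \<omega>p by simp
    then show ?thesis unfolding \<theta>_def by (rule integral_unique)
  qed
  show ?thesis using L1 split I1 I2 I3 by (simp add: S_def)
qed

lemma path_I:
  fixes x0 :: "'a::euclidean_space" and p :: "int \<Rightarrow> 'a" and b gV :: "'a \<Rightarrow> 'a"
  assumes bc: "continuous_on UNIV b" and gVc: "continuous_on UNIV gV"
    and Mc: "\<And>z. norm z \<le> norm x0 + (norm (p 0) + norm (p 1) + norm (p 2)) \<Longrightarrow> norm (cfield gV b z) \<le> Mc"
    and pper: "\<And>j. p j = p (j mod 3)" and p0: "p 0 = 0" and \<omega>: "\<omega> \<ge> 0" and T: "T \<ge> 2"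
    and \<psi>_def: "\<psi> = (\<lambda>t. if t \<le> 1 then (1 - t) *\<^sub>R x0 else lp p (\<omega> * (t - 1)))"
    and D\<psi>_def: "D\<psi> = (\<lambda>t. if t < 1 then - x0 else \<omega> *\<^sub>R ld p (\<omega> * (t - 1)))"
    and E_def: "E = {0, 1, T} \<union> range (\<lambda>j::int. 1 + of_int j / \<omega>)"
    and L\<psi>_def: "L\<psi> = norm x0 + \<omega> * (norm (p 1 - p 0) + norm (p 2 - p 1) + norm (p 0 - p 2))"
  shows "(LINT t:{0..T}|lebesgue. (norm (dpath T \<psi> t - cfield gV b (\<psi> t)))\<^sup>2) \<le> T * (L\<psi> + Mc)\<^sup>2"
proof -
  note P = path_props[OF pper p0 \<omega> T \<psi>_def D\<psi>_def E_def L\<psi>_def]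
  note H = path_H[OF pper p0 \<omega> T \<psi>_def D\<psi>_def E_def L\<psi>_def]
  define h where "h t = (norm (dpath T \<psi> t - cfield gV b (\<psi> t)))\<^sup>2" for t
  define B where "B = (L\<psi> + Mc)\<^sup>2"
  have cc: "continuous_on UNIV (cfield gV b)" unfolding cfield_def by (intro continuous_intros gVc bc)
  have c\<psi>: "continuous_on {0..T} (\<lambda>t. cfield gV b (\<psi> t))"
    by (rule continuous_on_compose2[OF cc H(4)]) auto
  have hm: "h measurable_on {0..T}"
    unfolding h_def by (rule meas_norm_sq_diff[OF H(3) measurable_on_Icc_cont[OF c\<psi>]])
  have "norm (cfield gV b 0) \<le> Mc" by (rule Mc) simp
  then have Mc0: "Mc \<ge> 0" using norm_ge_zero order_trans by blast
  have hb: "norm (h t) \<le> B" if t: "t \<in> {0..T} - E" for t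
  proof -
    have "norm (dpath T \<psi> t - cfield gV b (\<psi> t)) \<le> norm (D\<psi> t) + norm (cfield gV b (\<psi> t))"
      unfolding H(2)[OF t] by (rule norm_triangle_ineq4)
    also have "\<dots> \<le> L\<psi> + Mc" using P(4)[of t] Mc[OF P(5)] t by (intro add_mono) auto
    finally have "(norm (dpath T \<psi> t - cfield gV b (\<psi> t)))\<^sup>2 \<le> (L\<psi> + Mc)\<^sup>2"
      by (intro power_mono) auto
    then show ?thesis by (simp add: h_def B_def)
  qed
  have hi: "h absolutely_integrable_on {0..T}" by (rule abs_int_bound_ae[OF hm P(1) hb])
  have "(LINT t:{0..T}|lebesgue. h t) = integral {0..T} h"
    using set_lebesgue_integral_eq_integral(2)[OF hi] .
  also have "\<dots> \<le> integral {0..T} (\<lambda>t. if t \<in> E then h t else B)"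
  proof (rule integral_le)
    show "h integrable_on {0..T}" using set_lebesgue_integral_eq_integral(1)[OF hi] .
    show "(\<lambda>t. if t \<in> E then h t else B) integrable_on {0..T}"
      by (rule integrable_spike[OF integrable_const_ivl[of B 0 T] P(1)]) auto
    show "h t \<le> (if t \<in> E then h t else B)" if "t \<in> {0..T}" for t
      using hb[of t] that by auto
  qed
  also have "\<dots> = integral {0..T} (\<lambda>t. B)"
    by (rule integral_spike[OF P(1)]) auto
  also have "\<dots> = T * B" using T by (simp add: integral_const_real)
  finally show ?thesis by (simp add: h_def B_def)
qed

lemma noncons_triangle:
  fixes b :: "'a::euclidean_space \<Rightarrow> 'a"
  assumes bc: "continuous_on UNIV b"
    and nc: "\<not> (\<exists>U :: 'a \<Rightarrow> real. \<forall>z. (U has_derivative (\<lambda>h. inner (b z) h)) (at z))"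
  shows "\<exists>z h. Wint b 0 z + Wint b z h + Wint b (z + h) (- (z + h)) \<noteq> 0"
proof (rule ccontr)
  assume "\<not> (\<exists>z h. Wint b 0 z + Wint b z h + Wint b (z + h) (- (z + h)) \<noteq> 0)"
  then have all0: "\<And>z h. Wint b 0 z + Wint b z h + Wint b (z + h) (- (z + h)) = 0" by blast
  define U where "U z = Wint b 0 z" for z
  have Ustep: "U (z + h) = U z + Wint b z h" for z h
  proof -
    have "Wint b (0 + (z + h)) (- (z + h)) = - Wint b 0 (z + h)" by (rule Wint_rev[OF bc])
    then show ?thesis using all0[of z h] by (simp add: U_def)
  qed
  have "(U has_derivative (\<lambda>h. inner (b z) h)) (at z)" for z
    unfolding has_derivative_at_alt
  proof (intro conjI allI impI)
    show "bounded_linear (\<lambda>h. inner (b z) h)" by (rule bounded_linear_inner_right)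
    fix e :: real assume e: "e > 0"
    have "isCont b z" using bc by (simp add: continuous_on_eq_continuous_at)
    then obtain d where d: "d > 0" "\<And>w. dist w z < d \<Longrightarrow> dist (b w) (b z) < e"
      unfolding continuous_at_eps_delta using e by blast
    show "\<exists>d>0. \<forall>y. norm (y - z) < d \<longrightarrow> norm (U y - U z - inner (b z) (y - z)) \<le> e * norm (y - z)"
    proof (intro exI[of _ d] conjI allI impI d(1))
      fix y assume y: "norm (y - z) < d"
      define h where "h = y - z"
      have F: "((\<lambda>s. inner (b (z + s *\<^sub>R h)) h - inner (b z) h) has_integral (Wint b z h - inner (b z) h)) (cbox 0 1)"
        using has_integral_diff[OF Wint_has_integral[OF bc] has_integral_const_real[of "inner (b z) h" 0 1]]
        by simp
      have "norm (Wint b z h - inner (b z) h) \<le> (e * norm h) * measure lborel (cbox (0::real) 1)"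
      proof (rule has_integral_bound[OF _ F])
        show "0 \<le> e * norm h" using e by simp
        fix s :: real assume s: "s \<in> cbox 0 1"
        have "dist (z + s *\<^sub>R h) z = \<bar>s\<bar> * norm h" by (simp add: dist_norm)
        also have "\<dots> \<le> norm h" using s by (auto intro: mult_left_le_one_le)
        also have "\<dots> < d" using y by (simp add: h_def)
        finally have "dist (b (z + s *\<^sub>R h)) (b z) < e" by (rule d(2))
        then have "norm (b (z + s *\<^sub>R h) - b z) \<le> e" by (simp add: dist_norm)
        then have "norm (inner (b (z + s *\<^sub>R h) - b z) h) \<le> e * norm h"
        proof -
          have "\<bar>inner (b (z + s *\<^sub>R h) - b z) h\<bar> \<le> norm (b (z + s *\<^sub>R h) - b z) * norm h"
            by (rule Cauchy_Schwarz_ineq2)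
          also have "\<dots> \<le> e * norm h"
            using \<open>norm (b (z + s *\<^sub>R h) - b z) \<le> e\<close> by (rule mult_right_mono) simp
          finally show ?thesis by simp
        qed
        then show "norm (inner (b (z + s *\<^sub>R h)) h - inner (b z) h) \<le> e * norm h"
          by (simp add: inner_diff_left)
      qed
      then have "norm (Wint b z h - inner (b z) h) \<le> e * norm h" by simp
      moreover have "U y - U z = Wint b z h" using Ustep[of z h] by (simp add: h_def)
      ultimately show "norm (U y - U z - inner (b z) (y - z)) \<le> e * norm (y - z)"
        by (simp add: h_def)
    qed
  qed
  then show False using nc by blast
qed

lemma competitor:
  fixes b gV :: "'a::euclidean_space \<Rightarrow> 'a" and p :: "int \<Rightarrow> 'a"
  assumes bc: "continuous_on UNIV b" and M: "\<And>z. norm (b z) \<le> M"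
    and gVc: "continuous_on UNIV gV"
    and pper: "\<And>j. p j = p (j mod 3)" and p0: "p 0 = 0"
    and \<kappa>: "\<kappa> = wfun b p 0 + wfun b p 1 + wfun b p 2" "\<kappa> \<noteq> 0"
  shows "\<exists>C. \<forall>T x0 q. T \<ge> 2 \<longrightarrow> norm x0 \<le> X \<longrightarrow> \<bar>q\<bar> \<le> Q \<longrightarrow> (q * T / 2 - Wint b x0 (- x0)) / \<kappa> \<ge> 0 \<longrightarrow>
            (\<exists>\<psi> \<in> A_T b T x0 q. I_T gV b T x0 \<psi> \<le> ereal (C * T))"
proof -
  define Lp where "Lp = norm (p 1 - p 0) + norm (p 2 - p 1) + norm (p 0 - p 2)"
  define Rp where "Rp = norm (p 0) + norm (p 1) + norm (p 2)"
  define k where "k = \<bar>\<kappa>\<bar>"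
  have k: "k > 0" using \<kappa>(2) by (simp add: k_def)
  have M0: "M \<ge> 0" using M[of 0] norm_ge_zero order_trans by blast
  define \<Omega> where "\<Omega> = 3 * \<bar>Q\<bar> / k + 3 * (M * \<bar>X\<bar> / k + 1)"
  define R where "R = \<bar>X\<bar> + Rp"
  have cc: "continuous_on UNIV (cfield gV b)" unfolding cfield_def by (intro continuous_intros gVc bc)
  have "compact (cfield gV b ` cball 0 R)" by (intro compact_continuous_image continuous_on_subset[OF cc]) auto
  then obtain Mc where Mc: "\<And>z. z \<in> cball 0 R \<Longrightarrow> norm (cfield gV b z) \<le> Mc"
    using compact_imp_bounded[THEN bounded_iff[THEN iffD1]] by fastforce
  define C where "C = (1/2) * (\<bar>X\<bar> + \<Omega> * Lp + \<bar>Mc\<bar>)\<^sup>2"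
  show ?thesis
  proof (intro exI[of _ C] allI impI)
    fix T :: real and x0 :: 'a and q :: real
    assume T: "T \<ge> 2" and x0: "norm x0 \<le> X" and q: "\<bar>q\<bar> \<le> Q" and A: "(q * T / 2 - Wint b x0 (- x0)) / \<kappa> \<ge> 0"
    define A where "A = q * T / 2 - Wint b x0 (- x0)"
    obtain \<theta> where \<theta>: "0 \<le> \<theta>" "\<theta> \<le> 3 * (A / \<kappa> + 1)" "integral {0..\<theta>} (kfun b p) = A"
      using loop_ivt[OF bc pper \<kappa>, of A] A unfolding A_def by blast
    define \<omega> where "\<omega> = \<theta> / (T - 1)"
    have T1: "T - 1 > 0" using T by simp
    have \<omega>0: "\<omega> \<ge> 0" using \<theta>(1) T1 by (simp add: \<omega>_def)
    have \<theta>\<omega>: "\<omega> * (T - 1) = \<theta>" using T1 by (simp add: \<omega>_def)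
    have Aabs: "A / \<kappa> = \<bar>A\<bar> / k"
    proof -
      have "A / \<kappa> = \<bar>A / \<kappa>\<bar>" by (rule abs_of_nonneg[symmetric]) (use A in \<open>simp add: A_def\<close>)
      also have "\<dots> = \<bar>A\<bar> / k" by (simp add: k_def)
      finally show ?thesis .
    qed
    have Wb: "\<bar>Wint b x0 (- x0)\<bar> \<le> M * norm x0" using Wint_bound[OF bc M, of x0 "- x0"] by simp
    have a1: "\<bar>A\<bar> \<le> \<bar>q * T / 2\<bar> + \<bar>Wint b x0 (- x0)\<bar>"
      unfolding A_def by (rule abs_triangle_ineq4)
    have a2: "\<bar>q * T / 2\<bar> = \<bar>q\<bar> * T / 2" using T by (simp add: abs_mult)
    have a3: "\<bar>q\<bar> * T / 2 \<le> \<bar>Q\<bar> * T / 2"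
    proof -
      have "\<bar>q\<bar> * T \<le> \<bar>Q\<bar> * T" using q T by (intro mult_right_mono) auto
      then show ?thesis by simp
    qed
    have a4: "M * norm x0 \<le> M * \<bar>X\<bar>" using x0 M0 by (intro mult_left_mono) auto
    have Ab: "\<bar>A\<bar> \<le> \<bar>Q\<bar> * T / 2 + M * \<bar>X\<bar>" using a1 a2 a3 a4 Wb by linarith
    have s1: "\<bar>A\<bar> / k \<le> (\<bar>Q\<bar> / k) * (T / 2) + M * \<bar>X\<bar> / k"
      using divide_right_mono[OF Ab, of k] k by (simp add: add_divide_distrib)
    have s2: "(\<bar>Q\<bar> / k) * (T / 2) \<le> (\<bar>Q\<bar> / k) * (T - 1)"
      using T k by (intro mult_left_mono) auto
    have s3: "M * \<bar>X\<bar> / k + 1 \<le> (M * \<bar>X\<bar> / k + 1) * (T - 1)"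
    proof -
      have "0 \<le> M * \<bar>X\<bar> / k" using M0 k by simp
      then have "(M * \<bar>X\<bar> / k + 1) * 1 \<le> (M * \<bar>X\<bar> / k + 1) * (T - 1)"
        using T by (intro mult_left_mono) auto
      then show ?thesis by simp
    qed
    have "\<theta> \<le> 3 * (\<bar>A\<bar> / k + 1)" using \<theta>(2) Aabs by simp
    also have "\<dots> \<le> 3 * ((\<bar>Q\<bar> / k) * (T - 1) + (M * \<bar>X\<bar> / k + 1) * (T - 1))"
    proof -
      have "\<bar>A\<bar> / k + 1 \<le> (\<bar>Q\<bar> / k) * (T - 1) + (M * \<bar>X\<bar> / k + 1) * (T - 1)"
        using s1 s2 s3 by linarith
      from mult_left_mono[OF this, of 3] show ?thesis by simp
    qed
    also have "\<dots> = \<Omega> * (T - 1)" by (simp add: \<Omega>_def algebra_simps)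
    finally have "\<theta> \<le> \<Omega> * (T - 1)" .
    then have \<omega>\<Omega>: "\<omega> \<le> \<Omega>" using T1 by (simp add: \<omega>_def pos_divide_le_eq)
    define \<psi> where "\<psi> = (\<lambda>t. if t \<le> 1 then (1 - t) *\<^sub>R x0 else lp p (\<omega> * (t - 1)))"
    define D\<psi> where "D\<psi> = (\<lambda>t. if t < 1 then - x0 else \<omega> *\<^sub>R ld p (\<omega> * (t - 1)))"
    define E where "E = {0, 1, T} \<union> range (\<lambda>j::int. 1 + of_int j / \<omega>)"
    define L\<psi> where "L\<psi> = norm x0 + \<omega> * (norm (p 1 - p 0) + norm (p 2 - p 1) + norm (p 0 - p 2))"
    note P = path_props[OF pper p0 \<omega>0 T \<psi>_def D\<psi>_def E_def L\<psi>_def]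
    note H = path_H[OF pper p0 \<omega>0 T \<psi>_def D\<psi>_def E_def L\<psi>_def]
    have Lint: "(LINT t:{0..T}|lebesgue. inner (b (\<psi> t)) (dpath T \<psi> t)) = Wint b x0 (- x0) + A"
      using path_L[OF bc M pper p0 \<omega>0 T \<psi>_def D\<psi>_def E_def L\<psi>_def] \<theta>\<omega> \<theta>(3) by simp
    have "L_T b T \<psi> = q"
      unfolding L_T_def Lint A_def using T by simp
    then have \<psi>A: "\<psi> \<in> A_T b T x0 q" using H(1) unfolding A_T_def by simp
    have Mc': "norm (cfield gV b z) \<le> \<bar>Mc\<bar>" if "norm z \<le> norm x0 + (norm (p 0) + norm (p 1) + norm (p 2))" for z
    proof -
      have "z \<in> cball 0 R" using that x0 unfolding R_def Rp_def by auto
      then show ?thesis using Mc by fastforce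
    qed
    have Ib: "(LINT t:{0..T}|lebesgue. (norm (dpath T \<psi> t - cfield gV b (\<psi> t)))\<^sup>2) \<le> T * (L\<psi> + \<bar>Mc\<bar>)\<^sup>2"
      by (rule path_I[OF bc gVc Mc' pper p0 \<omega>0 T \<psi>_def D\<psi>_def E_def L\<psi>_def])
    have "L\<psi> \<le> \<bar>X\<bar> + \<Omega> * Lp"
    proof -
      have "\<omega> * Lp \<le> \<Omega> * Lp" using \<omega>\<Omega> by (intro mult_right_mono) (auto simp: Lp_def)
      then show ?thesis using x0 unfolding L\<psi>_def Lp_def by linarith
    qed
    then have "(L\<psi> + \<bar>Mc\<bar>)\<^sup>2 \<le> (\<bar>X\<bar> + \<Omega> * Lp + \<bar>Mc\<bar>)\<^sup>2"
      using P(7) by (intro power_mono) auto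
    then have "T * (L\<psi> + \<bar>Mc\<bar>)\<^sup>2 \<le> T * (\<bar>X\<bar> + \<Omega> * Lp + \<bar>Mc\<bar>)\<^sup>2"
      using T by (intro mult_left_mono) auto
    with Ib have "(1/2) * (LINT t:{0..T}|lebesgue. (norm (dpath T \<psi> t - cfield gV b (\<psi> t)))\<^sup>2) \<le> C * T"
      unfolding C_def by (simp add: mult.commute)
    then have "I_T gV b T x0 \<psi> \<le> ereal (C * T)"
      using H(1) unfolding I_T_def by simp
    then show "\<exists>\<psi> \<in> A_T b T x0 q. I_T gV b T x0 \<psi> \<le> ereal (C * T)" using \<psi>A by blast
  qed
qed

theorem lemma5p4:
  fixes V :: "'a::euclidean_space \<Rightarrow> real"
    and gV b :: "'a \<Rightarrow> 'a"
    and q :: real and x :: "nat \<Rightarrow> 'a" and T qs :: "nat \<Rightarrow> real"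
    and \<phi> :: "nat \<Rightarrow> real \<Rightarrow> 'a"
  assumes V_grad: "\<And>z. (V has_derivative (\<lambda>h. inner (gV z) h)) (at z)"
    and V_C2: "\<exists>D :: 'a \<Rightarrow> 'a \<Rightarrow>\<^sub>L 'a. (\<forall>z. (gV has_derivative blinfun_apply (D z)) (at z))
                  \<and> continuous_on UNIV D"
    and V_growth: "filterlim (\<lambda>z. inner (gV z) z / norm z) at_top at_infinity"
    and b_C1: "\<exists>D :: 'a \<Rightarrow> 'a \<Rightarrow>\<^sub>L 'a. (\<forall>z. (b has_derivative blinfun_apply (D z)) (at z))
                  \<and> continuous_on UNIV D \<and> bounded (range D)"
    and b_bounded: "bounded (range b)"
    and b_nonconservative: "\<not> (\<exists>U :: 'a \<Rightarrow> real. \<forall>z. (U has_derivative (\<lambda>h. inner (b z) h)) (at z))"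
    and orth: "\<And>z. inner (gV z) (b z) = 0"
    and x_bounded: "bounded (range x)"
    and T_pos: "\<And>n. T n > 0"
    and T_lim: "filterlim T at_top sequentially"
    and qs_lim: "qs \<longlonglongrightarrow> q"
    and \<phi>_adm: "\<And>n. \<phi> n \<in> A_T b (T n) (x n) (qs n)"
    and \<phi>_min: "\<And>n. I_T gV b (T n) (x n) (\<phi> n) = S_T gV b (T n) (x n) (qs n)"
  shows "\<exists>C>0. \<forall>n. norm (\<phi> n (T n)) \<le> C * (T n + 1)"
proof -
  obtain Dg where Dg: "\<And>z. (gV has_derivative blinfun_apply (Dg z)) (at z)" using V_C2 by blast
  have gVc: "continuous_on UNIV gV"
    using Dg by (meson continuous_at_imp_continuous_on has_derivative_continuous)
  obtain Db where Db: "\<And>z. (b has_derivative blinfun_apply (Db z)) (at z)" using b_C1 by blast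
  have bc: "continuous_on UNIV b"
    using Db by (meson continuous_at_imp_continuous_on has_derivative_continuous)
  obtain M where M: "\<And>z. norm (b z) \<le> M" using b_bounded unfolding bounded_iff by blast
  obtain X where X: "\<And>n. norm (x n) \<le> X" using x_bounded unfolding bounded_iff by blast
  obtain Q where Q: "\<And>n. \<bar>qs n\<bar> \<le> Q"
    using convergent_imp_bounded[OF qs_lim] unfolding bounded_iff by auto
  obtain z h where zh: "Wint b 0 z + Wint b z h + Wint b (z + h) (- (z + h)) \<noteq> 0"
    using noncons_triangle[OF bc b_nonconservative] by blast
  define p :: "int \<Rightarrow> 'a" where "p j = (if j mod 3 = 0 then 0 else if j mod 3 = 1 then z else z + h)" for j
  define p' :: "int \<Rightarrow> 'a" where "p' j = p (- j)" for j
  have pper: "p j = p (j mod 3)" for j by (simp add: p_def)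
  have p0: "p 0 = 0" by (simp add: p_def)
  have pper': "p' j = p' (j mod 3)" for j
  proof -
    have "(- j) mod 3 = (- (j mod 3)) mod 3" by (simp add: mod_minus_eq)
    then show ?thesis unfolding p'_def by (metis pper)
  qed
  have p'0: "p' 0 = 0" by (simp add: p'_def p0)
  define \<kappa> where "\<kappa> = wfun b p 0 + wfun b p 1 + wfun b p 2"
  define \<kappa>' where "\<kappa>' = wfun b p' 0 + wfun b p' 1 + wfun b p' 2"
  have pv: "p 1 = z" "p 2 = z + h" "p 3 = 0" "p (-1) = z + h" "p (-2) = z" "p (-3) = 0"
    by (simp_all add: p_def)
  have \<kappa>eq: "\<kappa> = Wint b 0 z + Wint b z h + Wint b (z + h) (- (z + h))"
    unfolding \<kappa>_def wfun_def using pv p0 by simp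
  have \<kappa>'eq: "\<kappa>' = Wint b 0 (z + h) + Wint b (z + h) (- h) + Wint b z (- z)"
    unfolding \<kappa>'_def wfun_def p'_def using pv p0 by simp
  have r1: "Wint b (z + h) (- h) = - Wint b z h" using Wint_rev[OF bc, of z h] .
  have r2: "Wint b z (- z) = - Wint b 0 z" using Wint_rev[OF bc, of 0 z] by simp
  have r3: "Wint b (z + h) (- (z + h)) = - Wint b 0 (z + h)" using Wint_rev[OF bc, of 0 "z + h"] by simp
  have \<kappa>'\<kappa>: "\<kappa>' = - \<kappa>" unfolding \<kappa>'eq \<kappa>eq r1 r2 r3 by simp
  have \<kappa>0: "\<kappa> \<noteq> 0" using zh \<kappa>eq by simp
  have \<kappa>'0: "\<kappa>' \<noteq> 0" using \<kappa>0 \<kappa>'\<kappa> by simp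
  obtain C1 where C1: "\<And>T x0 q. T \<ge> 2 \<Longrightarrow> norm x0 \<le> X \<Longrightarrow> \<bar>q\<bar> \<le> Q \<Longrightarrow> (q * T / 2 - Wint b x0 (- x0)) / \<kappa> \<ge> 0 \<Longrightarrow>
            (\<exists>\<psi> \<in> A_T b T x0 q. I_T gV b T x0 \<psi> \<le> ereal (C1 * T))"
    using competitor[OF bc M gVc pper p0 \<kappa>_def \<kappa>0, of X Q] by blast
  obtain C2 where C2: "\<And>T x0 q. T \<ge> 2 \<Longrightarrow> norm x0 \<le> X \<Longrightarrow> \<bar>q\<bar> \<le> Q \<Longrightarrow> (q * T / 2 - Wint b x0 (- x0)) / \<kappa>' \<ge> 0 \<Longrightarrow>
            (\<exists>\<psi> \<in> A_T b T x0 q. I_T gV b T x0 \<psi> \<le> ereal (C2 * T))"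
    using competitor[OF bc M gVc pper' p'0 \<kappa>'_def \<kappa>'0, of X Q] by blast
  define Cm where "Cm = max C1 C2"
  have Ibound: "(1/2) * (LINT t:{0..T n}|lebesgue. (norm (dpath (T n) (\<phi> n) t - cfield gV b (\<phi> n t)))\<^sup>2) \<le> Cm * T n"
    if Tn: "T n \<ge> 2" for n
  proof -
    define A where "A = qs n * T n / 2 - Wint b (x n) (- x n)"
    have "\<exists>\<psi> \<in> A_T b (T n) (x n) (qs n). I_T gV b (T n) (x n) \<psi> \<le> ereal (Cm * T n)"
    proof (cases "A / \<kappa> \<ge> 0")
      case True
      then obtain \<psi> where "\<psi> \<in> A_T b (T n) (x n) (qs n)" "I_T gV b (T n) (x n) \<psi> \<le> ereal (C1 * T n)"
        using C1[OF Tn X Q] unfolding A_def by blast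
      moreover have "C1 * T n \<le> Cm * T n" using Tn by (intro mult_right_mono) (auto simp: Cm_def)
      ultimately show ?thesis by (meson ereal_less_eq(3) order_trans)
    next
      case False
      then have "A / \<kappa>' \<ge> 0" using \<kappa>'\<kappa> by simp
      then obtain \<psi> where "\<psi> \<in> A_T b (T n) (x n) (qs n)" "I_T gV b (T n) (x n) \<psi> \<le> ereal (C2 * T n)"
        using C2[OF Tn X Q] unfolding A_def by blast
      moreover have "C2 * T n \<le> Cm * T n" using Tn by (intro mult_right_mono) (auto simp: Cm_def)
      ultimately show ?thesis by (meson ereal_less_eq(3) order_trans)
    qed
    then obtain \<psi> where \<psi>: "\<psi> \<in> A_T b (T n) (x n) (qs n)" "I_T gV b (T n) (x n) \<psi> \<le> ereal (Cm * T n)"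
      by blast
    have "I_T gV b (T n) (x n) (\<phi> n) \<le> I_T gV b (T n) (x n) \<psi>"
      unfolding \<phi>_min S_T_def by (rule INF_lower[OF \<psi>(1)])
    also have "\<dots> \<le> ereal (Cm * T n)" by (rule \<psi>(2))
    finally have "I_T gV b (T n) (x n) (\<phi> n) \<le> ereal (Cm * T n)" .
    moreover have "\<phi> n \<in> H_Tx (T n) (x n)" using \<phi>_adm[of n] unfolding A_T_def by simp
    ultimately show ?thesis unfolding I_T_def by simp
  qed
  obtain B where B: "\<And>y. norm y \<le> V y + B" using V_lower[OF V_grad V_growth] by blast
  have Vc: "continuous_on UNIV V"
    using V_grad by (meson continuous_at_imp_continuous_on has_derivative_continuous)
  have "compact (V ` cball 0 X)" by (intro compact_continuous_image continuous_on_subset[OF Vc]) auto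
  then obtain VX where VX: "\<And>y. y \<in> cball 0 X \<Longrightarrow> \<bar>V y\<bar> \<le> VX"
    using compact_imp_bounded[THEN bounded_iff[THEN iffD1]] by fastforce
  have big: "norm (\<phi> n (T n)) \<le> (\<bar>VX\<bar> + \<bar>B\<bar> + \<bar>Cm\<bar> + 1) * (T n + 1)" if Tn: "T n \<ge> 2" for n
  proof -
    have H: "\<phi> n \<in> H_T (T n)" and x0: "\<phi> n 0 = x n"
      using \<phi>_adm[of n] unfolding A_T_def H_Tx_def by auto
    have "V (\<phi> n (T n)) - V (\<phi> n 0) \<le> (1/2) * (LINT t:{0..T n}|lebesgue. (norm (dpath (T n) (\<phi> n) t - cfield gV b (\<phi> n t)))\<^sup>2)"
      by (rule energy(2)[OF V_grad gVc bc orth T_pos H])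
    also have "\<dots> \<le> Cm * T n" by (rule Ibound[OF Tn])
    finally have "V (\<phi> n (T n)) \<le> V (x n) + Cm * T n" using x0 by simp
    moreover have "V (x n) \<le> \<bar>VX\<bar>" using VX[of "x n"] X[of n] by auto
    moreover have "Cm * T n \<le> \<bar>Cm\<bar> * T n" using Tn by (intro mult_right_mono) auto
    ultimately have "norm (\<phi> n (T n)) \<le> \<bar>VX\<bar> + \<bar>B\<bar> + \<bar>Cm\<bar> * T n"
      using B[of "\<phi> n (T n)"] by linarith
    also have "\<dots> \<le> (\<bar>VX\<bar> + \<bar>B\<bar> + \<bar>Cm\<bar> + 1) * (T n + 1)"
      using Tn by (simp add: algebra_simps)
    finally show ?thesis .
  qed
  obtain N where N: "\<And>n. n \<ge> N \<Longrightarrow> T n \<ge> 2"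
    using T_lim unfolding filterlim_at_top eventually_sequentially by blast
  define Y where "Y = (\<Sum>n<N. norm (\<phi> n (T n)))"
  have Y0: "Y \<ge> 0" unfolding Y_def by (intro sum_nonneg) auto
  define C where "C = \<bar>VX\<bar> + \<bar>B\<bar> + \<bar>Cm\<bar> + 1 + Y"
  show ?thesis
  proof (intro exI[of _ C] conjI allI)
    show "C > 0" using Y0 by (simp add: C_def add_pos_nonneg)
    fix n
    have Tn0: "T n > 0" by (rule T_pos)
    show "norm (\<phi> n (T n)) \<le> C * (T n + 1)"
    proof (cases "T n \<ge> 2")
      case True
      have "(\<bar>VX\<bar> + \<bar>B\<bar> + \<bar>Cm\<bar> + 1) * (T n + 1) \<le> C * (T n + 1)"
        using Tn0 Y0 by (intro mult_right_mono) (auto simp: C_def)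
      then show ?thesis using big[OF True] by linarith
    next
      case False
      then have "n < N" using N by (meson not_le_imp_less)
      then have "norm (\<phi> n (T n)) \<le> Y" unfolding Y_def
        by (intro member_le_sum) auto
      also have "\<dots> \<le> C" by (simp add: C_def)
      also have "\<dots> \<le> C * (T n + 1)"
      proof -
        have "C \<ge> 0" using Y0 by (simp add: C_def)
        then have "C * 1 \<le> C * (T n + 1)" using Tn0 by (intro mult_left_mono) auto
        then show ?thesis by simp
      qed
      finally show ?thesis .
    qed
  qed
qed

end
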